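(* Let $n\in\mathbb N$, let $H_1,\dots,H_n$ be BF-monoids, and let $H=H_1\times\dots\times H_n$. Then (1) $\mathcal R(H)=\bigcup_{i=1}^n\mathcal R(H_i)$; (2) $\operatorname{Ca}(H)=\bigcup_{i=1}^n\operatorname{Ca}(H_i)$; (3) $\daleth^*(H)=\bigcup_{i=1}^n\daleth^*(H_i)$.
   Context: A monoid is a commutative cancellative semigroup with identity; $H_{\mathrm{red}}=H/H^\times$, $\mathcal A(H)$ its atoms. For $a\in H$, $\mathsf Z(a)$ is the set of factorizations of $a$ (elements of the free abelian monoid on $\mathcal A(H_{\mathrm{red}})$ multiplying to $aH^\times$), $|z|$ the number of atoms in $z$, $\mathsf L(a)=\{|z|:z\in\mathsf Z(a)\}$. $H$ is a BF-monoid if $\mathsf L(a)$ is finite and nonempty for all $a\in H$. $\daleth^*(H) = \{\min(\mathsf L(uv)\setminus\{2\}) : u,v \in \mathcal A(H),\ |\mathsf L(uv)|>1\}$. Distance: writing $z = u_1\cdots u_k v_1\cdots v_\ell$, $z'=u_1\cdots u_k w_1\cdots w_m$ with no $v_i$ equal to any $w_j$, $\mathsf d(z,z')=\max\{\ell,m\}$. An $N$-chain from $z$ to $z'$ in $\mathsf Z(a)$ is a sequence $z=z_0,\dots,z_n=z'$ in $\mathsf Z(a)$ with $\mathsf d(z_{i-1},z_i)\le N$. $\mathsf c(a)$ is the least $N$ such that any two factorizations of $a$ are connected by an $N$-chain; $\operatorname{Ca}(H)=\{\mathsf c(a): a\in H,\ |\mathsf Z(a)|>1\}$. $\mathcal R(H)$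 is the set of $d\in\mathbb N_{\ge2}$ such that some $a\in H$ has distinct $z,z'\in\mathsf Z(a)$ with $\mathsf d(z,z')=d$ not connected by any $(d-1)$-chain. *)

theory Defs
  imports "HOL-Algebra.Divisibility" "HOL-Library.FuncSet" "HOL-Library.Multiset"
begin

text \<open>Monoids in the sense of the paper: commutative cancellative monoids,
  i.e. HOL-Algebra's comm_monoid_cancel.  Atoms are the irreducible
  (non-unit) elements of the carrier.\<close>

definition atoms :: "('a, 'b) monoid_scheme \<Rightarrow> 'a set" where
  "atoms G = {u \<in> carrier G. irreducible G u}"

text \<open>Factorizations of a: elements of the free abelian monoid over the atoms
  of H_red, represented as multisets of associate classes of atoms
  whose product is associated to a.\<close>

definition Zs :: "('a, 'b) monoid_scheme \<Rightarrow> 'a \<Rightarrow> 'a set multiset set" where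
  "Zs G a = fmset G ` {as. set as \<subseteq> carrier G \<and> wfactors G as a}"

definition Ls :: "('a, 'b) monoid_scheme \<Rightarrow> 'a \<Rightarrow> nat set" where
  "Ls G a = size ` Zs G a"

definition BF_monoid :: "('a, 'b) monoid_scheme \<Rightarrow> bool" where
  "BF_monoid G \<longleftrightarrow> comm_monoid_cancel G \<and>
     (\<forall>a \<in> carrier G. finite (Ls G a) \<and> Ls G a \<noteq> {})"

definition fdist :: "'c multiset \<Rightarrow> 'c multiset \<Rightarrow> nat" where
  "fdist z z' = max (size (z - z')) (size (z' - z))"

definition is_chain :: "'c multiset set \<Rightarrow> nat \<Rightarrow> 'c multiset \<Rightarrow> 'c multiset \<Rightarrow> bool" where
  "is_chain Z N z z' \<longleftrightarrow> (\<exists>zs. zs \<noteq> [] \<and> hd zs = z \<and> last zs = z' \<and> set zs \<subseteq> Z \<and>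
      (\<forall>i. Suc i < length zs \<longrightarrow> fdist (zs ! i) (zs ! Suc i) \<le> N))"

definition catenary_degree :: "('a, 'b) monoid_scheme \<Rightarrow> 'a \<Rightarrow> nat" where
  "catenary_degree G a =
     (LEAST N. \<forall>z \<in> Zs G a. \<forall>z' \<in> Zs G a. is_chain (Zs G a) N z z')"

definition Ca :: "('a, 'b) monoid_scheme \<Rightarrow> nat set" where
  "Ca G = {catenary_degree G a | a. a \<in> carrier G \<and>
            (\<exists>z \<in> Zs G a. \<exists>z' \<in> Zs G a. z \<noteq> z')}"

definition Rset :: "('a, 'b) monoid_scheme \<Rightarrow> nat set" where
  "Rset G = {d. 2 \<le> d \<and> (\<exists>a \<in> carrier G. \<exists>z \<in> Zs G a. \<exists>z' \<in> Zs G a.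
              z \<noteq> z' \<and> fdist z z' = d \<and> \<not> is_chain (Zs G a) (d - 1) z z')}"

definition daleth_star :: "('a, 'b) monoid_scheme \<Rightarrow> nat set" where
  "daleth_star G = {Min (Ls G (u \<otimes>\<^bsub>G\<^esub> v) - {2}) | u v.
      u \<in> atoms G \<and> v \<in> atoms G \<and> card (Ls G (u \<otimes>\<^bsub>G\<^esub> v)) > 1}"

text \<open>Direct product H_0 x ... x H_(n-1) of a family of monoids
  (componentwise operation on functions with support {..<n}).\<close>
definition prodM :: "nat \<Rightarrow> (nat \<Rightarrow> ('a, 'b) monoid_scheme) \<Rightarrow> (nat \<Rightarrow> 'a) monoid" where
  "prodM n H = \<lparr> carrier = (\<Pi>\<^sub>E i\<in>{..<n}. carrier (H i)),
                 mult = (\<lambda>f g. \<lambda>i\<in>{..<n}. f i \<otimes>\<^bsub>H i\<^esub> g i),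
                 one = (\<lambda>i\<in>{..<n}. \<one>\<^bsub>H i\<^esub>) \<rparr>"

end

theory Submission
  imports Defs
begin

locale prodfam =
  fixes n :: nat and H :: "nat \<Rightarrow> ('a, 'b) monoid_scheme"
  assumes cmc: "\<And>i. i < n \<Longrightarrow> comm_monoid_cancel (H i)"
begin

abbreviation "G \<equiv> prodM n H"

lemma carrierG: "carrier G = (\<Pi>\<^sub>E i\<in>{..<n}. carrier (H i))"
  by (simp add: prodM_def)
lemma multG: "x \<otimes>\<^bsub>G\<^esub> y = (\<lambda>i\<in>{..<n}. x i \<otimes>\<^bsub>H i\<^esub> y i)"
  by (simp add: prodM_def)
lemma oneG: "\<one>\<^bsub>G\<^esub> = (\<lambda>i\<in>{..<n}. \<one>\<^bsub>H i\<^esub>)"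
  by (simp add: prodM_def)

lemma mult_app: "i < n \<Longrightarrow> (x \<otimes>\<^bsub>G\<^esub> y) i = x i \<otimes>\<^bsub>H i\<^esub> y i"
  by (simp add: multG)
lemma one_app: "i < n \<Longrightarrow> \<one>\<^bsub>G\<^esub> i = \<one>\<^bsub>H i\<^esub>"
  by (simp add: oneG)

lemma cm: "i < n \<Longrightarrow> comm_monoid (H i)"
  using cmc comm_monoid_cancel.axioms(2) by blast
lemma mo: "i < n \<Longrightarrow> monoid (H i)"
  using cm comm_monoid.axioms(1) by blast

lemma carrier_app: "x \<in> carrier G \<Longrightarrow> i < n \<Longrightarrow> x i \<in> carrier (H i)"
  by (auto simp: carrierG)

lemma carrier_ext: "x \<in> carrier G \<Longrightarrow> y \<in> carrier G \<Longrightarrow> (\<And>i. i < n \<Longrightarrow> x i = y i) \<Longrightarrow> x = y"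
proof (rule ext)
  fix i assume a: "x \<in> carrier G" "y \<in> carrier G" "\<And>i. i < n \<Longrightarrow> x i = y i"
  show "x i = y i" by (cases "i < n") (use a in \<open>auto simp: carrierG PiE_iff extensional_def\<close>)
qed

lemma m_closedG: "x \<in> carrier G \<Longrightarrow> y \<in> carrier G \<Longrightarrow> x \<otimes>\<^bsub>G\<^esub> y \<in> carrier G"
  unfolding multG carrierG restrict_PiE_iff
  by (auto intro!: monoid.m_closed[OF mo] simp: PiE_iff)

lemma one_closedG: "\<one>\<^bsub>G\<^esub> \<in> carrier G"
  unfolding oneG carrierG restrict_PiE_iff by (auto intro: monoid.one_closed[OF mo])

lemma G_cm: "comm_monoid G"
proof (rule comm_monoidI)
  fix x y assume "x \<in> carrier G" "y \<in> carrier G"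
  then show "x \<otimes>\<^bsub>G\<^esub> y \<in> carrier G" by (rule m_closedG)
next
  show "\<one>\<^bsub>G\<^esub> \<in> carrier G" by (rule one_closedG)
next
  fix x y z assume a: "x \<in> carrier G" "y \<in> carrier G" "z \<in> carrier G"
  show "x \<otimes>\<^bsub>G\<^esub> y \<otimes>\<^bsub>G\<^esub> z = x \<otimes>\<^bsub>G\<^esub> (y \<otimes>\<^bsub>G\<^esub> z)"
    by (rule carrier_ext) (use a in \<open>simp_all add: m_closedG mult_app carrier_app monoid.m_assoc[OF mo]\<close>)
next
  fix x assume a: "x \<in> carrier G"
  show "\<one>\<^bsub>G\<^esub> \<otimes>\<^bsub>G\<^esub> x = x"
    by (rule carrier_ext) (use a in \<open>simp_all add: m_closedG one_closedG mult_app one_app carrier_app monoid.l_one[OF mo]\<close>)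
next
  fix x y assume a: "x \<in> carrier G" "y \<in> carrier G"
  show "x \<otimes>\<^bsub>G\<^esub> y = y \<otimes>\<^bsub>G\<^esub> x"
    by (rule carrier_ext) (use a in \<open>simp_all add: m_closedG mult_app carrier_app comm_monoid.m_comm[OF cm]\<close>)
qed

lemma G_cmc: "comm_monoid_cancel G"
proof (rule comm_monoid_cancelI[OF G_cm])
  fix a b c assume h: "a \<otimes>\<^bsub>G\<^esub> c = b \<otimes>\<^bsub>G\<^esub> c" "a \<in> carrier G" "b \<in> carrier G" "c \<in> carrier G"
  show "a = b"
  proof (rule carrier_ext[OF h(2,3)])
    fix i assume i: "i < n"
    have "(a \<otimes>\<^bsub>G\<^esub> c) i = (b \<otimes>\<^bsub>G\<^esub> c) i" using h by simp
    then have "a i \<otimes>\<^bsub>H i\<^esub> c i = b i \<otimes>\<^bsub>H i\<^esub> c i" using i by (simp add: mult_app)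
    then show "a i = b i"
      using monoid_cancel.r_cancel[OF comm_monoid_cancel.axioms(1)[OF cmc[OF i]]] h i carrier_app by blast
  qed
qed

sublocale G: comm_monoid_cancel G by (rule G_cmc)

lemma Units_G_D: "f \<in> Units G \<Longrightarrow> i < n \<Longrightarrow> f i \<in> Units (H i)"
proof -
  assume f: "f \<in> Units G" and i: "i < n"
  then obtain g where g: "g \<in> carrier G" "g \<otimes>\<^bsub>G\<^esub> f = \<one>\<^bsub>G\<^esub>" "f \<otimes>\<^bsub>G\<^esub> g = \<one>\<^bsub>G\<^esub>"
    unfolding Units_def by blast
  have fc: "f \<in> carrier G" using f unfolding Units_def by blast
  have 1: "g i \<otimes>\<^bsub>H i\<^esub> f i = \<one>\<^bsub>H i\<^esub>" using g(2) i by (metis mult_app one_app)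
  have 2: "f i \<otimes>\<^bsub>H i\<^esub> g i = \<one>\<^bsub>H i\<^esub>" using g(3) i by (metis mult_app one_app)
  have "g i \<in> carrier (H i)" "f i \<in> carrier (H i)" using g(1) fc i carrier_app by blast+
  with 1 2 show "f i \<in> Units (H i)" unfolding Units_def by blast
qed

lemma Units_G_I:
  assumes f: "f \<in> carrier G" and u: "\<And>i. i < n \<Longrightarrow> f i \<in> Units (H i)"
  shows "f \<in> Units G"
proof -
  define g where "g = (\<lambda>i\<in>{..<n}. inv\<^bsub>H i\<^esub> (f i))"
  have gc: "g \<in> carrier G" unfolding g_def carrierG restrict_PiE_iff
    using u by (auto intro: monoid.Units_inv_closed[OF mo])
  have "g \<otimes>\<^bsub>G\<^esub> f = \<one>\<^bsub>G\<^esub>"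
    by (rule carrier_ext) (use gc f u in \<open>simp_all add: m_closedG one_closedG mult_app one_app g_def monoid.Units_l_inv[OF mo]\<close>)
  moreover have "f \<otimes>\<^bsub>G\<^esub> g = \<one>\<^bsub>G\<^esub>"
    by (rule carrier_ext) (use gc f u in \<open>simp_all add: m_closedG one_closedG mult_app one_app g_def monoid.Units_r_inv[OF mo]\<close>)
  ultimately show "f \<in> Units G" using f gc unfolding Units_def by blast
qed

lemma Units_G: "f \<in> Units G \<longleftrightarrow> f \<in> carrier G \<and> (\<forall>i<n. f i \<in> Units (H i))"
  using Units_G_D Units_G_I G.Units_closed by blast

lemma divides_G:
  assumes "f \<in> carrier G" "g \<in> carrier G"
  shows "f divides\<^bsub>G\<^esub> g \<longleftrightarrow> (\<forall>i<n. f i divides\<^bsub>H i\<^esub> g i)"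
proof
  assume "f divides\<^bsub>G\<^esub> g"
  then obtain c where c: "c \<in> carrier G" "g = f \<otimes>\<^bsub>G\<^esub> c" by (auto simp: factor_def)
  then show "\<forall>i<n. f i divides\<^bsub>H i\<^esub> g i"
    by (auto simp: factor_def mult_app intro!: bexI[of _ "c _"] carrier_app)
next
  assume h: "\<forall>i<n. f i divides\<^bsub>H i\<^esub> g i"
  define c where "c = (\<lambda>i\<in>{..<n}. SOME x. x \<in> carrier (H i) \<and> g i = f i \<otimes>\<^bsub>H i\<^esub> x)"
  have cc: "\<And>i. i < n \<Longrightarrow> c i \<in> carrier (H i) \<and> g i = f i \<otimes>\<^bsub>H i\<^esub> c i"
  proof -
    fix i assume i: "i < n"
    then obtain x where "x \<in> carrier (H i)" "g i = f i \<otimes>\<^bsub>H i\<^esub> x" using h by (auto simp: factor_def)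
    then show "c i \<in> carrier (H i) \<and> g i = f i \<otimes>\<^bsub>H i\<^esub> c i"
      unfolding c_def using i by (auto intro: someI2)
  qed
  have cG: "c \<in> carrier G" using cc by (auto simp: carrierG c_def)
  have "g = f \<otimes>\<^bsub>G\<^esub> c"
    by (rule carrier_ext) (use assms cG cc in \<open>auto simp: mult_app\<close>)
  then show "f divides\<^bsub>G\<^esub> g" using cG by (auto simp: factor_def)
qed

lemma assoc_G:
  assumes "f \<in> carrier G" "g \<in> carrier G"
  shows "f \<sim>\<^bsub>G\<^esub> g \<longleftrightarrow> (\<forall>i<n. f i \<sim>\<^bsub>H i\<^esub> g i)"
  using divides_G[OF assms] divides_G[OF assms(2,1)] by (auto simp: associated_def)

end

context prodfam begin

lemma cmcH: "i < n \<Longrightarrow> comm_monoid_cancel (H i)" by (rule cmc)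

lemma upd_carrier: "f \<in> carrier G \<Longrightarrow> i < n \<Longrightarrow> c \<in> carrier (H i) \<Longrightarrow> f(i := c) \<in> carrier G"
  unfolding carrierG by (metis PiE_fun_upd insert_absorb lessThan_iff)

lemma irr_G_I:
  assumes f: "f \<in> carrier G" and i: "i < n" and irr: "irreducible (H i) (f i)"
    and u: "\<And>j. j < n \<Longrightarrow> j \<noteq> i \<Longrightarrow> f j \<in> Units (H j)"
  shows "irreducible G f"
proof (rule irreducibleI)
  have "f i \<notin> Units (H i)" using irr unfolding irreducible_def by blast
  then show "f \<notin> Units G" using Units_G_D[of f i] i by blast
  fix b assume b: "b \<in> carrier G" "properfactor G b f"
  have bf: "\<forall>j<n. b j divides\<^bsub>H j\<^esub> f j" using b divides_G[OF b(1) f]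
    unfolding properfactor_def by blast
  have nfb: "\<not> f divides\<^bsub>G\<^esub> b" using b unfolding properfactor_def by blast
  have "\<not> f i divides\<^bsub>H i\<^esub> b i"
  proof
    assume h: "f i divides\<^bsub>H i\<^esub> b i"
    have "\<forall>j<n. f j divides\<^bsub>H j\<^esub> b j"
    proof (intro allI impI)
      fix j assume j: "j < n"
      show "f j divides\<^bsub>H j\<^esub> b j"
      proof (cases "j = i")
        case True then show ?thesis using h by simp
      next
        case False
        then show ?thesis using monoid.unit_divides[OF mo[OF j] u[OF j False] carrier_app[OF b(1) j]] by blast
      qed
    qed
    then show False using nfb divides_G[OF f b(1)] by blast
  qed
  then have "properfactor (H i) (b i) (f i)" using bf i unfolding properfactor_def by blast
  then have bi: "b i \<in> Units (H i)" by (rule irreducibleD[OF irr _ carrier_app[OF b(1) i]])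
  show "b \<in> Units G"
  proof (rule Units_G_I[OF b(1)])
    fix j assume j: "j < n"
    show "b j \<in> Units (H j)"
    proof (cases "j = i")
      case True then show ?thesis using bi by simp
    next
      case False
      then show ?thesis using comm_monoid.divides_unit[OF cm[OF j] _ carrier_app[OF b(1) j] u[OF j False]] bf j by blast
    qed
  qed
qed

lemma irr_G_D:
  assumes f: "f \<in> carrier G" and irr: "irreducible G f" and i: "i < n" and ni: "f i \<notin> Units (H i)"
  shows "irreducible (H i) (f i)" and "\<And>j. j < n \<Longrightarrow> j \<noteq> i \<Longrightarrow> f j \<in> Units (H j)"
proof -
  show "\<And>j. j < n \<Longrightarrow> j \<noteq> i \<Longrightarrow> f j \<in> Units (H j)"
  proof (rule ccontr)
    fix j assume j: "j < n" "j \<noteq> i" and nj: "f j \<notin> Units (H j)"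
    define b where "b = f(j := \<one>\<^bsub>H j\<^esub>)"
    have bc: "b \<in> carrier G" unfolding b_def by (rule upd_carrier[OF f j(1) monoid.one_closed[OF mo[OF j(1)]]])
    have "b divides\<^bsub>G\<^esub> f"
    proof (subst divides_G[OF bc f], intro allI impI)
      fix k assume k: "k < n"
      show "b k divides\<^bsub>H k\<^esub> f k"
      proof (cases "k = j")
        case True
        then show ?thesis unfolding b_def using monoid.unit_divides[OF mo[OF k]] carrier_app[OF f k]
          monoid.Units_one_closed[OF mo[OF k]] by simp
      next
        case False
        then show ?thesis unfolding b_def using monoid.divides_refl[OF mo[OF k]] carrier_app[OF f k] by simp
      qed
    qed
    moreover have "\<not> f divides\<^bsub>G\<^esub> b"
    proof
      assume "f divides\<^bsub>G\<^esub> b"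
      then have "f j divides\<^bsub>H j\<^esub> \<one>\<^bsub>H j\<^esub>" using divides_G[OF f bc] j unfolding b_def by force
      then show False using nj comm_monoid.divides_unit[OF cm[OF j(1)] _ carrier_app[OF f j(1)]
        monoid.Units_one_closed[OF mo[OF j(1)]]] by blast
    qed
    ultimately have "b \<in> Units G" by (intro irreducibleD[OF irr _ bc]) (simp add: properfactor_def)
    then have "b i \<in> Units (H i)" using Units_G_D i by blast
    then show False using ni j unfolding b_def by simp
  qed
  note u = this
  show "irreducible (H i) (f i)"
  proof (rule irreducibleI[OF ni])
    fix c assume c: "c \<in> carrier (H i)" "properfactor (H i) c (f i)"
    define b where "b = f(i := c)"
    have bc: "b \<in> carrier G" unfolding b_def using upd_carrier[OF f i c(1)] .
    have "b divides\<^bsub>G\<^esub> f"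
    proof (subst divides_G[OF bc f], intro allI impI)
      fix k assume k: "k < n"
      show "b k divides\<^bsub>H k\<^esub> f k"
      proof (cases "k = i")
        case True
        then show ?thesis unfolding b_def using c(2) unfolding properfactor_def by simp
      next
        case False
        then show ?thesis unfolding b_def using monoid.divides_refl[OF mo[OF k]] carrier_app[OF f k] by simp
      qed
    qed
    moreover have "\<not> f divides\<^bsub>G\<^esub> b"
    proof
      assume "f divides\<^bsub>G\<^esub> b"
      then have "f i divides\<^bsub>H i\<^esub> c" using divides_G[OF f bc] i unfolding b_def by force
      then show False using c(2) unfolding properfactor_def by blast
    qed
    ultimately have "b \<in> Units G" by (intro irreducibleD[OF irr _ bc]) (simp add: properfactor_def)
    then show "c \<in> Units (H i)" using Units_G_D[of b i] i unfolding b_def by simp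
  qed
qed

lemma irr_G_ex:
  assumes f: "f \<in> carrier G" and irr: "irreducible G f"
  obtains i where "i < n" "f i \<notin> Units (H i)"
proof -
  have "f \<notin> Units G" using irr unfolding irreducible_def by blast
  then show ?thesis using that Units_G_I[OF f] by blast
qed

definition e :: "nat \<Rightarrow> 'a \<Rightarrow> nat \<Rightarrow> 'a" where
  "e i x = (\<lambda>j\<in>{..<n}. if j = i then x else \<one>\<^bsub>H j\<^esub>)"

lemma e_carrier: "i < n \<Longrightarrow> x \<in> carrier (H i) \<Longrightarrow> e i x \<in> carrier G"
  unfolding e_def carrierG restrict_PiE_iff by (auto intro: monoid.one_closed[OF mo])
lemma e_same[simp]: "i < n \<Longrightarrow> e i x i = x" by (simp add: e_def)
lemma e_other[simp]: "j < n \<Longrightarrow> j \<noteq> i \<Longrightarrow> e i x j = \<one>\<^bsub>H j\<^esub>" by (simp add: e_def)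

lemma e_irr: "i < n \<Longrightarrow> x \<in> carrier (H i) \<Longrightarrow> irreducible (H i) x \<Longrightarrow> irreducible G (e i x)"
  by (rule irr_G_I[OF e_carrier, of i x i]) (auto intro: monoid.Units_one_closed[OF mo])

lemma e_mult: "i < n \<Longrightarrow> x \<in> carrier (H i) \<Longrightarrow> y \<in> carrier (H i) \<Longrightarrow>
   e i x \<otimes>\<^bsub>G\<^esub> e i y = e i (x \<otimes>\<^bsub>H i\<^esub> y)"
proof (rule carrier_ext)
  fix j assume "i < n" "x \<in> carrier (H i)" "y \<in> carrier (H i)" "j < n"
  then show "(e i x \<otimes>\<^bsub>G\<^esub> e i y) j = e i (x \<otimes>\<^bsub>H i\<^esub> y) j"
    by (cases "j = i") (simp_all add: mult_app monoid.l_one[OF mo] monoid.one_closed[OF mo])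
qed (simp_all add: m_closedG e_carrier monoid.m_closed[OF mo])

definition E :: "nat \<Rightarrow> 'a set \<Rightarrow> (nat \<Rightarrow> 'a) set" where
  "E i C = {f \<in> carrier G. f i \<in> C \<and> (\<forall>j<n. j \<noteq> i \<longrightarrow> f j \<in> Units (H j))}"

lemma assocs_eq: "assocs M x = {y \<in> carrier M. y \<sim>\<^bsub>M\<^esub> x}"
  by (simp add: eq_closure_of_def elem_def)

lemma assocs_G:
  assumes f: "f \<in> carrier G" and irr: "irreducible G f" and i: "i < n" and ni: "f i \<notin> Units (H i)"
  shows "assocs G f = E i (assocs (H i) (f i))"
proof -
  note u = irr_G_D(2)[OF f irr i ni]
  have "y \<sim>\<^bsub>G\<^esub> f \<longleftrightarrow> y i \<sim>\<^bsub>H i\<^esub> f i \<and> (\<forall>j<n. j \<noteq> i \<longrightarrow> y j \<in> Units (H j))"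
    if y: "y \<in> carrier G" for y
  proof -
    have "y j \<sim>\<^bsub>H j\<^esub> f j \<longleftrightarrow> y j \<in> Units (H j)" if j: "j < n" "j \<noteq> i" for j
    proof
      assume "y j \<sim>\<^bsub>H j\<^esub> f j"
      then show "y j \<in> Units (H j)"
        using monoid_cancel.assoc_unit_l[OF comm_monoid_cancel.axioms(1)[OF cmc[OF j(1)]] _ u[OF j] carrier_app[OF y j(1)]]
        by blast
    next
      assume "y j \<in> Units (H j)"
      then show "y j \<sim>\<^bsub>H j\<^esub> f j" using monoid.Units_assoc[OF mo[OF j(1)] _ u[OF j]] by blast
    qed
    then show ?thesis using assoc_G[OF y f] i by metis
  qed
  then show ?thesis unfolding assocs_eq E_def using carrier_app[OF _ i] by blast
qed

end

lemma (in comm_monoid) foldr_filter_units: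
  "set xs \<subseteq> carrier G \<Longrightarrow> foldr (\<otimes>) xs \<one> \<sim> foldr (\<otimes>) (filter (\<lambda>x. x \<notin> Units G) xs) \<one>"
proof (induction xs)
  case Nil show ?case by simp
next
  case (Cons x xs)
  have x: "x \<in> carrier G" and xs: "set xs \<subseteq> carrier G" using Cons.prems by auto
  have fs: "set (filter (\<lambda>x. x \<notin> Units G) xs) \<subseteq> carrier G" using xs by auto
  have ih: "foldr (\<otimes>) xs \<one> \<sim> foldr (\<otimes>) (filter (\<lambda>x. x \<notin> Units G) xs) \<one>" using Cons.IH xs by blast
  have pc: "foldr (\<otimes>) xs \<one> \<in> carrier G" using xs by (rule multlist_closed)
  have qc: "foldr (\<otimes>) (filter (\<lambda>x. x \<notin> Units G) xs) \<one> \<in> carrier G" using fs by (rule multlist_closed)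
  show ?case
  proof (cases "x \<in> Units G")
    case True
    have "x \<otimes> foldr (\<otimes>) xs \<one> \<sim> foldr (\<otimes>) xs \<one>"
      by (rule associatedI2[OF True]) (simp_all add: m_comm x pc)
    then show ?thesis using True ih associated_trans[of "x \<otimes> foldr (\<otimes>) xs \<one>"] x pc qc by simp
  next
    case False
    show ?thesis using mult_cong_r[OF ih x pc qc] False by simp
  qed
qed

lemma concat_delta: "concat (map (\<lambda>i. if i = j then X else []) [0..<m]) = (if j < m then X else [])"
  by (induction m) auto

context prodfam begin

lemma foldr_app: "set as \<subseteq> carrier G \<Longrightarrow> i < n \<Longrightarrow>
   (foldr (\<otimes>\<^bsub>G\<^esub>) as \<one>\<^bsub>G\<^esub>) i = foldr (\<otimes>\<^bsub>H i\<^esub>) (map (\<lambda>f. f i) as) \<one>\<^bsub>H i\<^esub>"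
  by (induction as) (simp_all add: mult_app one_app)

definition Phi :: "(nat \<Rightarrow> 'a set multiset) \<Rightarrow> (nat \<Rightarrow> 'a) set multiset" where
  "Phi W = (\<Sum>i<n. image_mset (E i) (W i))"

definition P :: "(nat \<Rightarrow> 'a) \<Rightarrow> (nat \<Rightarrow> 'a set multiset) set" where
  "P a = (\<Pi>\<^sub>E i\<in>{..<n}. Zs (H i) (a i))"

definition asi :: "(nat \<Rightarrow> 'a) list \<Rightarrow> nat \<Rightarrow> 'a list" where
  "asi as i = map (\<lambda>f. f i) (filter (\<lambda>f. f i \<notin> Units (H i)) as)"

lemma asi_wf:
  assumes a: "a \<in> carrier G" and as: "set as \<subseteq> carrier G" and wf: "wfactors G as a" and i: "i < n"
  shows "set (asi as i) \<subseteq> carrier (H i)" "wfactors (H i) (asi as i) (a i)"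
proof -
  interpret Hi: comm_monoid_cancel "H i" by (rule cmc[OF i])
  show sc: "set (asi as i) \<subseteq> carrier (H i)" using as carrier_app[OF _ i] by (auto simp: asi_def)
  have irr: "\<forall>x\<in>set (asi as i). irreducible (H i) x"
  proof
    fix x assume "x \<in> set (asi as i)"
    then obtain f where f: "f \<in> set as" "f i \<notin> Units (H i)" "x = f i" by (auto simp: asi_def)
    have fc: "f \<in> carrier G" "irreducible G f" using f(1) as wf by (auto simp: wfactors_def)
    show "irreducible (H i) x" using irr_G_D(1)[OF fc i f(2)] f(3) by simp
  qed
  have mc: "set (map (\<lambda>f. f i) as) \<subseteq> carrier (H i)" using as carrier_app[OF _ i] by auto
  have "foldr (\<otimes>\<^bsub>G\<^esub>) as \<one>\<^bsub>G\<^esub> \<sim>\<^bsub>G\<^esub> a" using wf by (simp add: wfactors_def)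
  then have 1: "(foldr (\<otimes>\<^bsub>G\<^esub>) as \<one>\<^bsub>G\<^esub>) i \<sim>\<^bsub>H i\<^esub> a i"
    using assoc_G[OF G.multlist_closed[OF as] a] i by blast
  have 2: "foldr (\<otimes>\<^bsub>H i\<^esub>) (map (\<lambda>f. f i) as) \<one>\<^bsub>H i\<^esub> \<sim>\<^bsub>H i\<^esub> foldr (\<otimes>\<^bsub>H i\<^esub>) (asi as i) \<one>\<^bsub>H i\<^esub>"
    using Hi.foldr_filter_units[OF mc] by (simp add: asi_def filter_map o_def)
  have "foldr (\<otimes>\<^bsub>H i\<^esub>) (asi as i) \<one>\<^bsub>H i\<^esub> \<sim>\<^bsub>H i\<^esub> a i"
    using Hi.associated_trans[OF Hi.associated_sym[OF 2] 1[unfolded foldr_app[OF as i]]]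
      Hi.multlist_closed[OF mc] Hi.multlist_closed[OF sc] carrier_app[OF a i] by blast
  then show "wfactors (H i) (asi as i) (a i)" using irr by (simp add: wfactors_def)
qed

lemma fmset_decomp:
  "(\<And>f. f \<in> set as \<Longrightarrow> f \<in> carrier G \<and> irreducible G f) \<Longrightarrow>
   fmset G as = (\<Sum>i<n. image_mset (E i) (fmset (H i) (asi as i)))"
proof (induction as)
  case Nil then show ?case by (simp add: fmset_def asi_def)
next
  case (Cons f as)
  have f: "f \<in> carrier G" "irreducible G f" using Cons.prems by auto
  obtain c where c: "c < n" "f c \<notin> Units (H c)" using irr_G_ex[OF f] by blast
  have ih: "fmset G as = (\<Sum>i<n. image_mset (E i) (fmset (H i) (asi as i)))" using Cons by auto
  have split: "image_mset (E i) (fmset (H i) (asi (f # as) i)) =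
      (if i = c then {#assocs G f#} else {#}) + image_mset (E i) (fmset (H i) (asi as i))" if i: "i < n" for i
  proof (cases "i = c")
    case True
    then show ?thesis using c assocs_G[OF f c] by (simp add: asi_def fmset_def)
  next
    case False
    then have "f i \<in> Units (H i)" using irr_G_D(2)[OF f c] i by blast
    then show ?thesis using False by (simp add: asi_def fmset_def)
  qed
  have "(\<Sum>i<n. image_mset (E i) (fmset (H i) (asi (f # as) i))) =
        (\<Sum>i<n. (if i = c then {#assocs G f#} else {#}) + image_mset (E i) (fmset (H i) (asi as i)))"
    by (rule sum.cong) (simp_all add: split)
  also have "\<dots> = {#assocs G f#} + (\<Sum>i<n. image_mset (E i) (fmset (H i) (asi as i)))"
    using c by (simp add: sum.distrib)
  also have "\<dots> = fmset G (f # as)" using ih by (simp add: fmset_def)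
  finally show ?case by simp
qed

lemma Phi_restrict: "Phi (restrict W {..<n}) = Phi W"
  unfolding Phi_def by (rule sum.cong) auto

lemma Zs_sub:
  assumes a: "a \<in> carrier G" and M: "M \<in> Zs G a"
  shows "M \<in> Phi ` P a"
proof -
  obtain as where as: "set as \<subseteq> carrier G" "wfactors G as a" "M = fmset G as"
    using M by (auto simp: Zs_def)
  define W where "W = (\<lambda>i\<in>{..<n}. fmset (H i) (asi as i))"
  have "W \<in> P a" unfolding P_def W_def restrict_PiE_iff Zs_def
    using asi_wf[OF a as(1,2)] by blast
  moreover have "M = Phi W" unfolding W_def Phi_restrict unfolding Phi_def as(3)
    by (rule fmset_decomp) (use as in \<open>auto simp: wfactors_def\<close>)
  ultimately show ?thesis by blast
qed

lemma Zs_memD: "M \<in> Zs K x \<Longrightarrow> \<exists>as. set as \<subseteq> carrier K \<and> wfactors K as x \<and> fmset K as = M"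
  unfolding Zs_def by auto

lemma Zs_sup:
  assumes a: "a \<in> carrier G" and W: "W \<in> P a"
  shows "Phi W \<in> Zs G a"
proof -
  have "\<forall>i\<in>{..<n}. \<exists>as. set as \<subseteq> carrier (H i) \<and> wfactors (H i) as (a i) \<and> fmset (H i) as = W i"
  proof
    fix i assume "i \<in> {..<n}"
    then have "W i \<in> Zs (H i) (a i)" using W by (simp add: P_def PiE_iff)
    then show "\<exists>as. set as \<subseteq> carrier (H i) \<and> wfactors (H i) as (a i) \<and> fmset (H i) as = W i"
      by (rule Zs_memD)
  qed
  then obtain L where L: "\<And>i. i < n \<Longrightarrow> set (L i) \<subseteq> carrier (H i) \<and> wfactors (H i) (L i) (a i) \<and> fmset (H i) (L i) = W i"
    by (metis lessThan_iff)
  define as where "as = concat (map (\<lambda>i. map (e i) (L i)) [0..<n])"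
  have asc: "set as \<subseteq> carrier G" using L e_carrier by (force simp: as_def)
  have asirr: "\<forall>f\<in>set as. irreducible G f"
    using L e_irr by (force simp: as_def wfactors_def)
  have filt: "filter (\<lambda>f. f j \<notin> Units (H j)) as = map (e j) (L j)" if j: "j < n" for j
  proof -
    have "filter (\<lambda>f. f j \<notin> Units (H j)) (map (e i) (L i)) = (if i = j then map (e j) (L j) else [])"
      if i: "i < n" for i
    proof (cases "i = j")
      case True
      have "\<forall>x\<in>set (L j). x \<notin> Units (H j)" using L[OF j] by (auto simp: wfactors_def irreducible_def)
      then show ?thesis using True j by (simp add: o_def)
    next
      case False
      then show ?thesis using j by (simp add: o_def monoid.Units_one_closed[OF mo[OF j]])
    qed
    then have "filter (\<lambda>f. f j \<notin> Units (H j)) as = concat (map (\<lambda>i. if i = j then map (e j) (L j) else []) [0..<n])"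
      unfolding as_def filter_concat map_map o_def by (intro arg_cong[where f=concat] map_cong) auto
    then show ?thesis using concat_delta[of j "map (e j) (L j)" n] j by argo
  qed
  have asi_eq: "asi as j = L j" if j: "j < n" for j
    unfolding asi_def filt[OF j] map_map o_def using j by simp
  have "foldr (\<otimes>\<^bsub>G\<^esub>) as \<one>\<^bsub>G\<^esub> \<sim>\<^bsub>G\<^esub> a"
  proof (subst assoc_G[OF G.multlist_closed[OF asc] a], intro allI impI)
    fix j assume j: "j < n"
    interpret Hj: comm_monoid_cancel "H j" by (rule cmc[OF j])
    have mc: "set (map (\<lambda>f. f j) as) \<subseteq> carrier (H j)" using asc carrier_app[OF _ j] by auto
    have 1: "foldr (\<otimes>\<^bsub>H j\<^esub>) (map (\<lambda>f. f j) as) \<one>\<^bsub>H j\<^esub> \<sim>\<^bsub>H j\<^esub> foldr (\<otimes>\<^bsub>H j\<^esub>) (L j) \<one>\<^bsub>H j\<^esub>"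
      using Hj.foldr_filter_units[OF mc] asi_eq[OF j] by (simp add: asi_def filter_map o_def)
    have 2: "foldr (\<otimes>\<^bsub>H j\<^esub>) (L j) \<one>\<^bsub>H j\<^esub> \<sim>\<^bsub>H j\<^esub> a j" using L[OF j] by (simp add: wfactors_def)
    have "set (L j) \<subseteq> carrier (H j)" using L[OF j] by blast
    then show "(foldr (\<otimes>\<^bsub>G\<^esub>) as \<one>\<^bsub>G\<^esub>) j \<sim>\<^bsub>H j\<^esub> a j"
      unfolding foldr_app[OF asc j]
      using Hj.associated_trans[OF 1 2] Hj.multlist_closed[OF mc] carrier_app[OF a j] by blast
  qed
  then have wf: "wfactors G as a" using asirr by (simp add: wfactors_def)
  have "fmset G as = (\<Sum>i<n. image_mset (E i) (fmset (H i) (asi as i)))"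
    by (rule fmset_decomp) (use asc asirr in auto)
  also have "\<dots> = Phi W" unfolding Phi_def by (rule sum.cong) (use L asi_eq in auto)
  finally have "Phi W = fmset G as" by simp
  then show ?thesis unfolding Zs_def using asc wf by blast
qed

lemma Zs_char: "a \<in> carrier G \<Longrightarrow> Zs G a = Phi ` P a"
  using Zs_sub Zs_sup by blast

end

lemma image_mset_diff_inj:
  "inj_on f (set_mset A \<union> set_mset B) \<Longrightarrow> image_mset f A - image_mset f B = image_mset f (A - B)"
proof (induction B arbitrary: A)
  case empty show ?case by simp
next
  case (add b B)
  have inj: "inj_on f (set_mset (A - {#b#}) \<union> set_mset B)"
    by (rule inj_on_subset[OF add.prems]) (auto dest: in_diffD)
  have 1: "image_mset f A - {#f b#} = image_mset f (A - {#b#})"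
  proof (cases "b \<in># A")
    case True
    then obtain A' where "A = add_mset b A'" by (metis multi_member_split)
    then show ?thesis by simp
  next
    case False
    have "f b \<notin># image_mset f A"
    proof
      assume "f b \<in># image_mset f A"
      then obtain a where "a \<in># A" "f a = f b" by auto
      then show False using False add.prems unfolding inj_on_def by auto
    qed
    then show ?thesis using False by (simp add: diff_single_trivial)
  qed
  have "image_mset f A - image_mset f (add_mset b B) = (image_mset f A - {#f b#}) - image_mset f B"
    by (simp add: diff_diff_add)
  also have "\<dots> = image_mset f (A - {#b#} - B)" unfolding 1 using add.IH[OF inj] .
  also have "\<dots> = image_mset f (A - add_mset b B)" by (simp add: diff_diff_add)
  finally show ?case .
qed

lemma diff_disjoint_sum:
  assumes "set_mset (A + B) \<inter> set_mset (C + D) = {}"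
  shows "(A + C) - (B + D) = (A - B) + (C - D)"
proof (rule multiset_eqI)
  fix x
  show "count (A + C - (B + D)) x = count (A - B + (C - D)) x"
  proof (cases "x \<in> set_mset (A + B)")
    case True
    then have "x \<notin># C" "x \<notin># D" using assms by auto
    then show ?thesis by (simp add: not_in_iff)
  next
    case False
    then have "x \<notin># A" "x \<notin># B" by auto
    then show ?thesis by (simp add: not_in_iff)
  qed
qed

lemma image_mset_sum_lt: "image_mset f (\<Sum>i<(k::nat). F i) = (\<Sum>i<k. image_mset f (F i))"
  by (induction k) auto

definition tagk :: "nat \<Rightarrow> (nat \<Rightarrow> 'c multiset) \<Rightarrow> (nat \<times> 'c) multiset" where
  "tagk k W = (\<Sum>i<k. image_mset (Pair i) (W i))"

lemma tagk_fst: "p \<in># tagk k W \<Longrightarrow> fst p < k"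
  by (induction k) (auto simp: tagk_def)

lemma tagk_mem: "p \<in># tagk k W \<Longrightarrow> snd p \<in># W (fst p)"
  by (induction k) (auto simp: tagk_def)

lemma size_tagk_diff: "size (tagk k W - tagk k W') = (\<Sum>i<k. size (W i - W' i))"
proof (induction k)
  case 0 then show ?case by (simp add: tagk_def)
next
  case (Suc k)
  have disj: "set_mset (tagk k W + tagk k W') \<inter> set_mset (image_mset (Pair k) (W k) + image_mset (Pair k) (W' k)) = {}"
    using tagk_fst[of _ k W] tagk_fst[of _ k W'] by fastforce
  have "tagk (Suc k) W - tagk (Suc k) W' =
        (tagk k W + image_mset (Pair k) (W k)) - (tagk k W' + image_mset (Pair k) (W' k))"
    by (simp add: tagk_def)
  also have "\<dots> = (tagk k W - tagk k W') + (image_mset (Pair k) (W k) - image_mset (Pair k) (W' k))"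
    by (rule diff_disjoint_sum[OF disj])
  also have "image_mset (Pair k) (W k) - image_mset (Pair k) (W' k) = image_mset (Pair k) (W k - W' k)"
    by (rule image_mset_diff_inj) (auto simp: inj_on_def)
  finally show ?case using Suc by simp
qed

definition Dist :: "nat \<Rightarrow> (nat \<Rightarrow> 'c multiset) \<Rightarrow> (nat \<Rightarrow> 'c multiset) \<Rightarrow> nat" where
  "Dist k W W' = max (\<Sum>i<k. size (W i - W' i)) (\<Sum>i<k. size (W' i - W i))"

context prodfam begin

definition good :: "(nat \<Rightarrow> 'a set multiset) \<Rightarrow> bool" where
  "good W \<longleftrightarrow> (\<forall>i<n. \<forall>C\<in>#W i. \<exists>x\<in>carrier (H i). irreducible (H i) x \<and> C = assocs (H i) x)"

lemma Zs_classes: assumes "M \<in> Zs K y" "C \<in># M" shows "\<exists>x\<in>carrier K. irreducible K x \<and> C = assocs K x"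
proof -
  obtain as where as: "set as \<subseteq> carrier K" "wfactors K as y" "fmset K as = M" using Zs_memD[OF assms(1)] by blast
  then obtain x where "x \<in> set as" "C = assocs K x" using assms(2) by (auto simp: fmset_def)
  then show ?thesis using as by (auto simp: wfactors_def)
qed

lemma P_good: "W \<in> P a \<Longrightarrow> good W"
  unfolding good_def P_def PiE_iff by (meson Zs_classes lessThan_iff)

lemma e_in_E: "i < n \<Longrightarrow> z \<in> carrier (H i) \<Longrightarrow> z \<in> C \<Longrightarrow> e i z \<in> E i C"
  unfolding E_def using e_carrier by (auto intro: monoid.Units_one_closed[OF mo])

lemma E_inj: assumes i: "i < n" and C: "C \<subseteq> carrier (H i)" "C' \<subseteq> carrier (H i)" and eq: "E i C = E i C'"
  shows "C = C'"
proof -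
  have "z \<in> C'" if "z \<in> C" for z
  proof -
    have "e i z \<in> E i C'" using e_in_E[OF i _ that] C(1) that eq by blast
    then show ?thesis using i by (simp add: E_def)
  qed
  moreover have "z \<in> C" if "z \<in> C'" for z
  proof -
    have "e i z \<in> E i C" using e_in_E[OF i _ that] C(2) that eq by blast
    then show ?thesis using i by (simp add: E_def)
  qed
  ultimately show ?thesis by blast
qed

definition TT :: "(nat \<times> 'a set) set" where
  "TT = {(i, assocs (H i) x) | i x. i < n \<and> x \<in> carrier (H i) \<and> irreducible (H i) x}"

lemma assocs_sub: "assocs K x \<subseteq> carrier K"
  by (simp add: assocs_eq)

lemma assocs_self': "i < n \<Longrightarrow> x \<in> carrier (H i) \<Longrightarrow> x \<in> assocs (H i) x"
  by (rule monoid.assocs_self[OF mo])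

lemma inj_TT: "inj_on (case_prod E) TT"
proof (rule inj_onI)
  fix p q assume p: "p \<in> TT" and q: "q \<in> TT" and eq: "case_prod E p = case_prod E q"
  obtain i x where px: "p = (i, assocs (H i) x)" "i < n" "x \<in> carrier (H i)" "irreducible (H i) x"
    using p unfolding TT_def by blast
  obtain j y where qy: "q = (j, assocs (H j) y)" "j < n" "y \<in> carrier (H j)" "irreducible (H j) y"
    using q unfolding TT_def by blast
  have eq': "E i (assocs (H i) x) = E j (assocs (H j) y)" using eq px qy by simp
  have "e i x \<in> E i (assocs (H i) x)" using e_in_E[OF px(2,3) assocs_self'[OF px(2,3)]] .
  then have "e i x \<in> E j (assocs (H j) y)" using eq' by simp
  have ij: "j = i"
  proof (rule ccontr)
    assume "j \<noteq> i"
    then have "e i x i \<in> Units (H i)" using \<open>e i x \<in> E j (assocs (H j) y)\<close> px(2) by (auto simp: E_def)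
    then show False using px(2,4) by (simp add: irreducible_def)
  qed
  then have "assocs (H i) x = assocs (H i) y" using E_inj[OF px(2) assocs_sub assocs_sub] eq' by simp
  then show "p = q" using px qy ij by simp
qed

lemma Phi_tag: "Phi W = image_mset (case_prod E) (tagk n W)"
  unfolding Phi_def tagk_def by (simp add: image_mset_sum_lt image_mset.compositionality o_def)

lemma good_tag: "good W \<Longrightarrow> set_mset (tagk n W) \<subseteq> TT"
proof
  fix p assume g: "good W" and p: "p \<in># tagk n W"
  have "fst p < n" "snd p \<in># W (fst p)" using tagk_fst[OF p] tagk_mem[OF p] by auto
  then show "p \<in> TT" using g unfolding good_def TT_def by (cases p) fastforce
qed

lemma Phi_diff: "good W \<Longrightarrow> good W' \<Longrightarrow> size (Phi W - Phi W') = (\<Sum>i<n. size (W i - W' i))"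
proof -
  assume g: "good W" "good W'"
  have "inj_on (case_prod E) (set_mset (tagk n W) \<union> set_mset (tagk n W'))"
    by (rule inj_on_subset[OF inj_TT]) (use good_tag[OF g(1)] good_tag[OF g(2)] in blast)
  then have "Phi W - Phi W' = image_mset (case_prod E) (tagk n W - tagk n W')"
    unfolding Phi_tag by (rule image_mset_diff_inj)
  then show ?thesis by (simp add: size_tagk_diff)
qed

lemma fdist_Phi: "good W \<Longrightarrow> good W' \<Longrightarrow> fdist (Phi W) (Phi W') = Dist n W W'"
  unfolding fdist_def Dist_def using Phi_diff by simp

lemma good_empty: "good (\<lambda>_. {#})" by (simp add: good_def)

lemma Phi_empty: "Phi (\<lambda>_. {#}) = {#}" by (simp add: Phi_def)

lemma size_Phi: "good W \<Longrightarrow> size (Phi W) = (\<Sum>i<n. size (W i))"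
  using Phi_diff[OF _ good_empty, of W] by (simp add: Phi_empty)

end

lemma chain_refl: "z \<in> Z \<Longrightarrow> is_chain Z N z z"
  unfolding is_chain_def by (rule exI[of _ "[z]"]) auto

lemma chain_cons: assumes "x \<in> Z" "fdist x y \<le> N" "is_chain Z N y z" shows "is_chain Z N x z"
proof -
  obtain zs where zs: "zs \<noteq> []" "hd zs = y" "last zs = z" "set zs \<subseteq> Z"
    "\<forall>i. Suc i < length zs \<longrightarrow> fdist (zs ! i) (zs ! Suc i) \<le> N"
    using assms(3) unfolding is_chain_def by blast
  have "\<forall>i. Suc i < length (x # zs) \<longrightarrow> fdist ((x # zs) ! i) ((x # zs) ! Suc i) \<le> N"
  proof (intro allI impI)
    fix i assume i: "Suc i < length (x # zs)"
    show "fdist ((x # zs) ! i) ((x # zs) ! Suc i) \<le> N"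
    proof (cases i)
      case 0 then show ?thesis using zs assms(2) by (simp add: hd_conv_nth)
    next
      case (Suc j) then show ?thesis using zs i by simp
    qed
  qed
  then show ?thesis unfolding is_chain_def using zs assms(1)
    by (intro exI[of _ "x # zs"]) auto
qed

lemma chain_induct_aux:
  "\<And>x z. zs \<noteq> [] \<Longrightarrow> hd zs = x \<Longrightarrow> last zs = z \<Longrightarrow> set zs \<subseteq> Z \<Longrightarrow>
    (\<forall>i. Suc i < length zs \<longrightarrow> fdist (zs ! i) (zs ! Suc i) \<le> N) \<Longrightarrow>
    (\<And>x. x \<in> Z \<Longrightarrow> Q x x) \<Longrightarrow>
    (\<And>x y z. x \<in> Z \<Longrightarrow> fdist x y \<le> N \<Longrightarrow> is_chain Z N y z \<Longrightarrow> Q y z \<Longrightarrow> Q x z) \<Longrightarrow> Q x z"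
proof (induction zs)
  case Nil then show ?case by simp
next
  case (Cons a zs)
  show ?case
  proof (cases "zs = []")
    case True then show ?thesis using Cons.prems by simp
  next
    case False
    have st: "\<forall>i. Suc i < length zs \<longrightarrow> fdist (zs ! i) (zs ! Suc i) \<le> N"
      using Cons.prems(5) by auto
    have ch: "is_chain Z N (hd zs) z" unfolding is_chain_def
      using False Cons.prems st by (intro exI[of _ zs]) auto
    have q: "Q (hd zs) z" using Cons.IH[OF False refl _ _ st Cons.prems(6,7)] False Cons.prems by auto
    have "fdist a (hd zs) \<le> N" using Cons.prems(5)[rule_format, of 0] False by (simp add: hd_conv_nth)
    then show ?thesis using Cons.prems(7)[OF _ _ ch q] Cons.prems by auto
  qed
qed

lemma chain_induct:
  assumes "is_chain Z N x z" "\<And>x. x \<in> Z \<Longrightarrow> Q x x"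
    "\<And>x y z. x \<in> Z \<Longrightarrow> fdist x y \<le> N \<Longrightarrow> is_chain Z N y z \<Longrightarrow> Q y z \<Longrightarrow> Q x z"
  shows "Q x z"
proof -
  obtain zs where zs: "zs \<noteq> []" "hd zs = x" "last zs = z" "set zs \<subseteq> Z"
    "\<forall>i. Suc i < length zs \<longrightarrow> fdist (zs ! i) (zs ! Suc i) \<le> N"
    using assms(1) unfolding is_chain_def by blast
  show ?thesis by (rule chain_induct_aux[OF zs assms(2,3)])
qed

lemma chain_trans: assumes "is_chain Z N x y" "is_chain Z N y z" shows "is_chain Z N x z"
proof -
  have "is_chain Z N y z \<longrightarrow> is_chain Z N x z"
  proof (rule chain_induct[OF assms(1), where Q="\<lambda>x y. is_chain Z N y z \<longrightarrow> is_chain Z N x z"])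
    fix x assume "x \<in> Z" show "is_chain Z N x z \<longrightarrow> is_chain Z N x z" by blast
  next
    fix x y w assume h: "x \<in> Z" "fdist x y \<le> N" "is_chain Z N w z \<longrightarrow> is_chain Z N y z"
    show "is_chain Z N w z \<longrightarrow> is_chain Z N x z"
      using chain_cons[OF h(1,2)] h(3) by blast
  qed
  then show ?thesis using assms(2) by blast
qed

lemma chain_map:
  assumes "is_chain Z N x z" "\<And>x. x \<in> Z \<Longrightarrow> f x \<in> Z'"
    "\<And>x y. x \<in> Z \<Longrightarrow> y \<in> Z \<Longrightarrow> fdist x y \<le> N \<Longrightarrow> fdist (f x) (f y) \<le> M"
  shows "is_chain Z' M (f x) (f z)"
proof -
  obtain zs where zs: "zs \<noteq> []" "hd zs = x" "last zs = z" "set zs \<subseteq> Z"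
    "\<forall>i. Suc i < length zs \<longrightarrow> fdist (zs ! i) (zs ! Suc i) \<le> N"
    using assms(1) unfolding is_chain_def by blast
  have "\<forall>i. Suc i < length (map f zs) \<longrightarrow> fdist (map f zs ! i) (map f zs ! Suc i) \<le> M"
  proof (intro allI impI)
    fix i assume i: "Suc i < length (map f zs)"
    have "zs ! i \<in> Z" "zs ! Suc i \<in> Z" using zs(4) i by auto
    then show "fdist (map f zs ! i) (map f zs ! Suc i) \<le> M" using assms(3) zs(5) i by simp
  qed
  then show ?thesis unfolding is_chain_def using zs assms(2)
    by (intro exI[of _ "map f zs"]) (auto simp: hd_map last_map)
qed

lemma chain_mono: "N \<le> M \<Longrightarrow> is_chain Z N x z \<Longrightarrow> is_chain Z M x z"
  using chain_map[of Z N x z id Z M] by auto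

lemma chain_mem: "is_chain Z N x z \<Longrightarrow> x \<in> Z \<and> z \<in> Z"
  unfolding is_chain_def by (metis hd_in_set last_in_set subsetD)

lemma fdist_sym: "fdist x y = fdist y x"
  by (simp add: fdist_def max.commute)

lemma fdist_0: "fdist x y = 0 \<Longrightarrow> x = y"
  unfolding fdist_def by (simp add: Diff_eq_empty_iff_mset subset_mset.antisym)

lemma chain_0: assumes "is_chain Z 0 x z" shows "x = z"
proof (rule chain_induct[OF assms, where Q="(=)"])
  fix x y w assume h: "x \<in> Z" "fdist x y \<le> 0" "y = w"
  then show "x = w" using fdist_0[of x y] by simp
qed simp

lemma chain_step: "z \<in> Z \<Longrightarrow> z' \<in> Z \<Longrightarrow> fdist z z' \<le> N \<Longrightarrow> is_chain Z N z z'"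
  by (rule chain_cons[OF _ _ chain_refl])

lemma fdist_le: "fdist x y \<le> max (size x) (size y)"
proof -
  have "size (x - y) \<le> size x" "size (y - x) \<le> size y"
    by (simp_all add: size_mset_mono)
  then show ?thesis unfolding fdist_def by linarith
qed

lemma fdist_pos_diff:
  "x \<noteq> y \<Longrightarrow> fdist x y > 0"
  using fdist_0 by auto

context prodfam begin

lemma Dist_ge: "i < n \<Longrightarrow> fdist (W i) (W' i) \<le> Dist n W W'"
proof -
  assume i: "i < n"
  have "size (W i - W' i) \<le> (\<Sum>j<n. size (W j - W' j))"
    by (rule member_le_sum) (use i in auto)
  moreover have "size (W' i - W i) \<le> (\<Sum>j<n. size (W' j - W j))"
    by (rule member_le_sum) (use i in auto)
  ultimately show ?thesis unfolding fdist_def Dist_def by linarith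
qed

lemma Dist_upd: "i < n \<Longrightarrow> Dist n (W(i := y)) (W(i := y')) = fdist y y'"
proof -
  assume i: "i < n"
  have 1: "(\<Sum>j<n. size ((W(i := y)) j - (W(i := y')) j)) = (\<Sum>j<n. if j = i then size (y - y') else 0)"
    by (rule sum.cong) auto
  have 2: "(\<Sum>j<n. size ((W(i := y')) j - (W(i := y)) j)) = (\<Sum>j<n. if j = i then size (y' - y) else 0)"
    by (rule sum.cong) auto
  show ?thesis unfolding Dist_def fdist_def 1 2 using i by simp
qed

lemma P_upd: assumes "W \<in> P a" "i < n" "y \<in> Zs (H i) (a i)" shows "W(i := y) \<in> P a"
proof -
  have "W(i := y) \<in> (\<Pi>\<^sub>E j\<in>insert i {..<n}. Zs (H j) (a j))"
    by (rule PiE_fun_upd) (use assms in \<open>simp_all add: P_def\<close>)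
  moreover have "insert i {..<n} = {..<n}" using assms(2) by auto
  ultimately show ?thesis by (simp add: P_def)
qed

lemma P_mem: "W \<in> P a \<Longrightarrow> i < n \<Longrightarrow> W i \<in> Zs (H i) (a i)"
  unfolding P_def by auto

lemma P_ext: "W \<in> P a \<Longrightarrow> W' \<in> P a \<Longrightarrow> (\<And>i. i < n \<Longrightarrow> W i = W' i) \<Longrightarrow> W = W'"
  unfolding P_def by (rule PiE_ext) auto

lemma fdist_PhiP: "W \<in> P a \<Longrightarrow> W' \<in> P a \<Longrightarrow> fdist (Phi W) (Phi W') = Dist n W W'"
  using fdist_Phi P_good by blast

lemma Phi_inj: assumes W: "W \<in> P a" "W' \<in> P a" and eq: "Phi W = Phi W'" shows "W = W'"
proof (rule P_ext[OF W])
  fix i assume i: "i < n"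
  have "Dist n W W' = 0" using fdist_PhiP[OF W] eq by (simp add: fdist_def)
  then have "fdist (W i) (W' i) = 0" using Dist_ge[OF i, of W W'] by simp
  then show "W i = W' i" by (rule fdist_0)
qed

lemma Phi_inj_on: "inj_on Phi (P a)"
  by (rule inj_onI) (rule Phi_inj)

lemma lift_chain:
  assumes a: "a \<in> carrier G" and W: "W \<in> P a" and i: "i < n"
    and ch: "is_chain (Zs (H i) (a i)) N y y'"
  shows "is_chain (Zs G a) N (Phi (W(i := y))) (Phi (W(i := y')))"
proof (rule chain_map[OF ch, where f="\<lambda>y. Phi (W(i := y))"])
  fix x assume "x \<in> Zs (H i) (a i)"
  then show "Phi (W(i := x)) \<in> Zs G a" using Zs_sup[OF a P_upd[OF W i]] by blast
next
  fix x x' assume x: "x \<in> Zs (H i) (a i)" "x' \<in> Zs (H i) (a i)" "fdist x x' \<le> N"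
  show "fdist (Phi (W(i := x))) (Phi (W(i := x'))) \<le> N"
    using fdist_PhiP[OF P_upd[OF W i x(1)] P_upd[OF W i x(2)]] Dist_upd[OF i, of W x x'] x(3) by linarith
qed

definition proj :: "(nat \<Rightarrow> 'a) \<Rightarrow> nat \<Rightarrow> (nat \<Rightarrow> 'a) set multiset \<Rightarrow> 'a set multiset" where
  "proj a i M = inv_into (P a) Phi M i"

lemma proj_Phi: "W \<in> P a \<Longrightarrow> proj a i (Phi W) = W i"
  unfolding proj_def by (simp add: inv_into_f_f[OF Phi_inj_on])

lemma proj_chain:
  assumes a: "a \<in> carrier G" and i: "i < n" and ch: "is_chain (Zs G a) N M M'"
  shows "is_chain (Zs (H i) (a i)) N (proj a i M) (proj a i M')"
proof (rule chain_map[OF ch])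
  fix x assume "x \<in> Zs G a"
  then obtain W where W: "W \<in> P a" "x = Phi W" using Zs_char[OF a] by blast
  then show "proj a i x \<in> Zs (H i) (a i)" using proj_Phi P_mem[OF _ i] by simp
next
  fix x x' assume x: "x \<in> Zs G a" "x' \<in> Zs G a" "fdist x x' \<le> N"
  obtain W where W: "W \<in> P a" "x = Phi W" using x(1) Zs_char[OF a] by blast
  obtain W' where W': "W' \<in> P a" "x' = Phi W'" using x(2) Zs_char[OF a] by blast
  show "fdist (proj a i x) (proj a i x') \<le> N"
    using Dist_ge[OF i, of W W'] fdist_PhiP[OF W(1) W'(1)] x(3) W W' proj_Phi by simp
qed

lemma coord_chain:
  assumes a: "a \<in> carrier G" and W: "W \<in> P a" "W' \<in> P a"
    and ch: "\<And>k. k < n \<Longrightarrow> is_chain (Zs (H k) (a k)) N (W k) (W' k)"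
  shows "is_chain (Zs G a) N (Phi W) (Phi W')"
proof -
  define V where "V m = (\<lambda>l. if l < m then W' l else W l)" for m
  have "m \<le> n \<longrightarrow> V m \<in> P a \<and> is_chain (Zs G a) N (Phi W) (Phi (V m))" for m
  proof (induction m)
    case 0
    have "V 0 = W" by (simp add: V_def)
    then show ?case using W(1) chain_refl[OF Zs_sup[OF a W(1)]] by simp
  next
    case (Suc m)
    show ?case
    proof
      assume m: "Suc m \<le> n"
      then have IH: "V m \<in> P a" "is_chain (Zs G a) N (Phi W) (Phi (V m))" using Suc by auto
      have e1: "(V m)(m := W m) = V m" by (auto simp: V_def)
      have e2: "(V m)(m := W' m) = V (Suc m)" by (auto simp: V_def)
      have "is_chain (Zs G a) N (Phi ((V m)(m := W m))) (Phi ((V m)(m := W' m)))"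
        by (rule lift_chain[OF a IH(1)]) (use m ch in auto)
      then have "is_chain (Zs G a) N (Phi (V m)) (Phi (V (Suc m)))" using e1 e2 by simp
      moreover have "V (Suc m) \<in> P a" using P_upd[OF IH(1), of m "W' m"] e2 m P_mem[OF W(2)] by simp
      ultimately show "V (Suc m) \<in> P a \<and> is_chain (Zs G a) N (Phi W) (Phi (V (Suc m)))"
        using chain_trans[OF IH(2)] by blast
    qed
  qed
  then have "V n \<in> P a" "is_chain (Zs G a) N (Phi W) (Phi (V n))" by auto
  moreover have "V n = W'"
    by (rule P_ext[OF \<open>V n \<in> P a\<close> W(2)]) (simp add: V_def)
  ultimately show ?thesis by simp
qed

end

lemma ZsD: "M \<in> Zs K x \<Longrightarrow> \<exists>as. set as \<subseteq> carrier K \<and> wfactors K as x \<and> fmset K as = M"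
  unfolding Zs_def by auto

lemma ZsC: assumes "M \<in> Zs K y" "C \<in># M" shows "\<exists>x\<in>carrier K. irreducible K x \<and> C = assocs K x"
proof -
  obtain as where as: "set as \<subseteq> carrier K" "wfactors K as y" "fmset K as = M" using ZsD[OF assms(1)] by blast
  then obtain x where "x \<in> set as" "C = assocs K x" using assms(2) by (auto simp: fmset_def)
  then show ?thesis using as by (auto simp: wfactors_def)
qed

lemma (in comm_monoid_cancel) Zs_unit: assumes u: "u \<in> Units G" shows "Zs G u = {{#}}"
proof (rule equalityI)
  show "Zs G u \<subseteq> {{#}}"
  proof
    fix M assume M: "M \<in> Zs G u"
    obtain as where as: "set as \<subseteq> carrier G" "wfactors G as u" "fmset G as = M" using ZsD[OF M] by blast
    have "as = []" by (rule unit_wfactors_empty[OF u as(2) as(1)])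
    then show "M \<in> {{#}}" using as(3) by (simp add: fmset_def)
  qed
next
  have "[] \<in> {as. set as \<subseteq> carrier G \<and> wfactors G as u}" using unit_wfactors[OF u] by simp
  then have "fmset G [] \<in> Zs G u" unfolding Zs_def by (rule imageI)
  then show "{{#}} \<subseteq> Zs G u" by (simp add: fmset_def)
qed

lemma (in comm_monoid_cancel) Zs_irr:
  assumes x: "x \<in> carrier G" "irreducible G x" and M: "M \<in> Zs G x"
  shows "size M = 1"
proof -
  obtain as where as: "set as \<subseteq> carrier G" "wfactors G as x" "fmset G as = M" using ZsD[OF M] by blast
  have irr: "\<forall>y\<in>set as. irreducible G y" and pr: "foldr (\<otimes>) as \<one> \<sim> x" using as(2) by (auto simp: wfactors_def)
  have xnu: "x \<notin> Units G" using x(2) by (simp add: irreducible_def)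
  have "length as = 1"
  proof (cases as)
    case Nil
    then have "\<one> \<sim> x" using pr by simp
    then have "x \<in> Units G" by (rule Units_cong[OF Units_one_closed _ x(1)])
    then show ?thesis using xnu by blast
  next
    case (Cons p r)
    show ?thesis
    proof (cases r)
      case Nil then show ?thesis using Cons by simp
    next
      case (Cons q s)
      have pc: "p \<in> carrier G" and qc: "q \<in> carrier G" and sc: "set s \<subseteq> carrier G"
        using as(1) \<open>as = p # r\<close> Cons by auto
      have rc: "foldr (\<otimes>) r \<one> \<in> carrier G" using Cons qc sc by simp
      have "p \<otimes> foldr (\<otimes>) r \<one> \<sim> x" using pr \<open>as = p # r\<close> by simp
      then have "x \<sim> p \<otimes> foldr (\<otimes>) r \<one>" by (rule associated_sym)
      then have "irreducible G (p \<otimes> foldr (\<otimes>) r \<one>)"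
        by (rule irreducible_cong[OF x(2) _ x(1) m_closed[OF pc rc]])
      then show ?thesis
      proof (rule irreducible_prodE[OF _ pc rc])
        assume "foldr (\<otimes>) r \<one> \<in> Units G"
        then have "q \<otimes> foldr (\<otimes>) s \<one> \<in> Units G" using Cons by simp
        then have "q \<in> Units G" by (rule unit_factor[OF _ qc multlist_closed[OF sc]])
        then show ?thesis using irr \<open>as = p # r\<close> Cons by (simp add: irreducible_def)
      next
        assume "p \<in> Units G"
        then show ?thesis using irr \<open>as = p # r\<close> by (simp add: irreducible_def)
      qed
    qed
  qed
  then show ?thesis unfolding as(3)[symmetric] fmset_def by simp
qed

lemma (in comm_monoid_cancel) Zs_ND:
  assumes x: "x \<in> carrier G" and y: "y \<in> Zs G x" "y' \<in> Zs G x" and sub: "y - y' = {#}"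
  shows "y = y'"
proof -
  obtain as where as: "set as \<subseteq> carrier G" "wfactors G as x" "fmset G as = y" using ZsD[OF y(1)] by blast
  obtain bs where bs: "set bs \<subseteq> carrier G" "wfactors G bs x" "fmset G bs = y'" using ZsD[OF y(2)] by blast
  have le: "y \<subseteq># y'" using sub by (simp add: Diff_eq_empty_iff_mset)
  define R where "R = y' - y"
  have y'eq: "y' = y + R" using le by (simp add: R_def)
  have "\<exists>c cs. c \<in> carrier G \<and> set cs \<subseteq> carrier G \<and> wfactors G cs c \<and> fmset G cs = R"
  proof (rule mset_wfactorsEx)
    fix X assume X: "X \<in># R"
    have "X \<in># y'" using X unfolding R_def by (rule in_diffD)
    then show "\<exists>x. (x \<in> carrier G \<and> irreducible G x) \<and> X = assocs G x" using ZsC[OF y(2)] by blast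
  qed
  then obtain c cs where c: "c \<in> carrier G" "set cs \<subseteq> carrier G" "wfactors G cs c" "fmset G cs = R"
    by blast
  have "fmset G bs = fmset G as + fmset G cs" using as(3) bs(3) c(4) y'eq by simp
  then have "x \<sim> x \<otimes> c" by (rule fmset_wfactors_mult) (use x c as bs in auto)
  then have "x \<otimes> \<one> \<sim> x \<otimes> c" using x by simp
  then have "\<one> \<sim> c" by (rule assoc_l_cancel[OF x one_closed c(1)])
  then have "c \<in> Units G" by (rule Units_cong[OF Units_one_closed _ c(1)])
  then have "cs = []" using unit_wfactors_empty c by blast
  then have "R = {#}" using c(4) by (simp add: fmset_def)
  then show ?thesis using y'eq by simp
qed

definition conn :: "'c multiset set \<Rightarrow> nat \<Rightarrow> bool" where
  "conn Z N \<longleftrightarrow> (\<forall>z\<in>Z. \<forall>z'\<in>Z. is_chain Z N z z')"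

lemma cat_conn: "catenary_degree K a = (LEAST N. conn (Zs K a) N)"
  by (simp add: catenary_degree_def conn_def)

lemma conn_mono: "N \<le> M \<Longrightarrow> conn Z N \<Longrightarrow> conn Z M"
  unfolding conn_def using chain_mono by blast

lemma conn_single: assumes "\<And>z z'. z \<in> Z \<Longrightarrow> z' \<in> Z \<Longrightarrow> z = z'" shows "conn Z N"
  unfolding conn_def
proof (intro ballI)
  fix z z' assume "z \<in> Z" "z' \<in> Z"
  then show "is_chain Z N z z'" using chain_refl[of z' Z N] assms by metis
qed

lemma conn_BF: assumes "BF_monoid K" "x \<in> carrier K" shows "conn (Zs K x) (Max (Ls K x))"
  unfolding conn_def
proof (intro ballI)
  fix z z' assume z: "z \<in> Zs K x" "z' \<in> Zs K x"
  have fin: "finite (Ls K x)" using assms unfolding BF_monoid_def by blast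
  have "size z \<in> Ls K x" "size z' \<in> Ls K x" using z by (auto simp: Ls_def)
  then have "size z \<le> Max (Ls K x)" "size z' \<le> Max (Ls K x)" using fin by auto
  then have "fdist z z' \<le> Max (Ls K x)" using fdist_le[of z z'] by linarith
  then show "is_chain (Zs K x) (Max (Ls K x)) z z'" by (rule chain_step[OF z])
qed

lemma least_max:
  fixes Q :: "'i \<Rightarrow> nat \<Rightarrow> bool"
  assumes K: "finite K" "K \<noteq> {}" and mono: "\<And>k N M. k \<in> K \<Longrightarrow> N \<le> M \<Longrightarrow> Q k N \<Longrightarrow> Q k M"
    and ex: "\<And>k. k \<in> K \<Longrightarrow> \<exists>N. Q k N"
  shows "(LEAST N. \<forall>k\<in>K. Q k N) \<in> (\<lambda>k. LEAST N. Q k N) ` K"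
proof -
  define c where "c k = (LEAST N. Q k N)" for k
  define m where "m = Max (c ` K)"
  have mK: "m \<in> c ` K" unfolding m_def using K by (intro Max_in) auto
  have Qc: "Q k (c k)" if "k \<in> K" for k unfolding c_def by (rule LeastI_ex[OF ex[OF that]])
  have all: "\<forall>k\<in>K. Q k m"
  proof
    fix k assume k: "k \<in> K"
    have "c k \<le> m" unfolding m_def using K k by auto
    then show "Q k m" using mono[OF k _ Qc[OF k]] by blast
  qed
  have "(LEAST N. \<forall>k\<in>K. Q k N) = m"
  proof (rule Least_equality[where P="\<lambda>N. \<forall>k\<in>K. Q k N"])
    show "\<forall>k\<in>K. Q k m" by (rule all)
  next
    fix N assume N: "\<forall>k\<in>K. Q k N"
    have "c k \<le> N" if "k \<in> K" for k unfolding c_def using N that by (simp add: Least_le)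
    then show "m \<le> N" unfolding m_def using K by auto
  qed
  then show ?thesis using mK unfolding c_def by simp
qed

context prodfam begin

lemma Zs_unit_H: "k < n \<Longrightarrow> u \<in> Units (H k) \<Longrightarrow> Zs (H k) u = {{#}}"
  by (rule comm_monoid_cancel.Zs_unit[OF cmc])

definition S :: "nat \<Rightarrow> 'a set multiset \<Rightarrow> nat \<Rightarrow> 'a set multiset" where
  "S i t = (\<lambda>k\<in>{..<n}. if k = i then t else {#})"

lemma S_P:
  assumes i: "i < n" and w: "\<And>k. k < n \<Longrightarrow> k \<noteq> i \<Longrightarrow> w k \<in> Units (H k)"
    and t: "t \<in> Zs (H i) (w i)"
  shows "S i t \<in> P w"
  unfolding P_def S_def restrict_PiE_iff
proof
  fix k assume k: "k \<in> {..<n}"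
  show "(if k = i then t else {#}) \<in> Zs (H k) (w k)"
  proof (cases "k = i")
    case True then show ?thesis using t by simp
  next
    case False then show ?thesis using Zs_unit_H[of k "w k"] w k by simp
  qed
qed

lemma S_at: "i < n \<Longrightarrow> S i t i = t" by (simp add: S_def)

lemma S_upd: "i < n \<Longrightarrow> S i t' = (S i t)(i := t')"
  by (auto simp: S_def)

lemma P_unit_coord:
  assumes "W \<in> P w" "k < n" "w k \<in> Units (H k)" shows "W k = {#}"
  using P_mem[OF assms(1,2)] Zs_unit_H[OF assms(2,3)] by simp

lemma Ls_G: "a \<in> carrier G \<Longrightarrow> Ls G a = (\<lambda>W. \<Sum>k<n. size (W k)) ` P a"
  unfolding Ls_def Zs_char image_image using size_Phi P_good by (auto simp: image_iff)

lemma sum_single: "i < n \<Longrightarrow> (\<And>k. k < n \<Longrightarrow> k \<noteq> i \<Longrightarrow> f k = (0::nat)) \<Longrightarrow> (\<Sum>k<n. f k) = f i"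
proof -
  assume i: "i < n" and z: "\<And>k. k < n \<Longrightarrow> k \<noteq> i \<Longrightarrow> f k = 0"
  have "(\<Sum>k<n. f k) = (\<Sum>k<n. if k = i then f i else 0)" by (rule sum.cong) (use z in auto)
  then show ?thesis using i by simp
qed

lemma Ls_single:
  assumes wc: "w \<in> carrier G" and i: "i < n" and w: "\<And>k. k < n \<Longrightarrow> k \<noteq> i \<Longrightarrow> w k \<in> Units (H k)"
  shows "Ls G w = Ls (H i) (w i)"
proof -
  have "(\<lambda>W. \<Sum>k<n. size (W k)) ` P w = size ` Zs (H i) (w i)"
  proof
    show "(\<lambda>W. \<Sum>k<n. size (W k)) ` P w \<subseteq> size ` Zs (H i) (w i)"
    proof
      fix s assume "s \<in> (\<lambda>W. \<Sum>k<n. size (W k)) ` P w"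
      then obtain W where W: "W \<in> P w" "s = (\<Sum>k<n. size (W k))" by blast
      have "s = size (W i)" unfolding W(2)
        by (rule sum_single[OF i]) (use P_unit_coord[OF W(1)] w in simp)
      then show "s \<in> size ` Zs (H i) (w i)" using P_mem[OF W(1) i] by blast
    qed
  next
    show "size ` Zs (H i) (w i) \<subseteq> (\<lambda>W. \<Sum>k<n. size (W k)) ` P w"
    proof
      fix s assume "s \<in> size ` Zs (H i) (w i)"
      then obtain t where t: "t \<in> Zs (H i) (w i)" "s = size t" by blast
      have "(\<Sum>k<n. size (S i t k)) = size (S i t i)"
        by (rule sum_single[OF i]) (simp add: S_def)
      then have "s = (\<Sum>k<n. size (S i t k))" using t(2) S_at[OF i] by simp
      then show "s \<in> (\<lambda>W. \<Sum>k<n. size (W k)) ` P w" using S_P[OF i w t(1)] by blast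
    qed
  qed
  then show ?thesis using Ls_G[OF wc] by (simp add: Ls_def)
qed

lemma e_units: "i < n \<Longrightarrow> k < n \<Longrightarrow> k \<noteq> i \<Longrightarrow> e i x k \<in> Units (H k)"
  by (simp add: monoid.Units_one_closed[OF mo])

lemma R_sub:
  assumes "d \<in> Rset G" shows "\<exists>i<n. d \<in> Rset (H i)"
proof -
  obtain a z z' where d: "2 \<le> d" and a: "a \<in> carrier G" and z: "z \<in> Zs G a" "z' \<in> Zs G a" "z \<noteq> z'"
    "fdist z z' = d" "\<not> is_chain (Zs G a) (d - 1) z z'"
    using assms unfolding Rset_def by blast
  obtain W where W: "W \<in> P a" "z = Phi W" using z(1) Zs_char[OF a] by blast
  obtain W' where W': "W' \<in> P a" "z' = Phi W'" using z(2) Zs_char[OF a] by blast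
  have dD: "Dist n W W' = d" using fdist_PhiP[OF W(1) W'(1)] z(4) W(2) W'(2) by simp
  have ND: "size (W l - W' l) > 0 \<and> size (W' l - W l) > 0" if l: "l < n" "W l \<noteq> W' l" for l
  proof -
    have m: "W l \<in> Zs (H l) (a l)" "W' l \<in> Zs (H l) (a l)" using P_mem[OF W(1) l(1)] P_mem[OF W'(1) l(1)] by auto
    have "W l - W' l \<noteq> {#}" using comm_monoid_cancel.Zs_ND[OF cmc[OF l(1)] carrier_app[OF a l(1)] m] l(2) by blast
    moreover have "W' l - W l \<noteq> {#}" using comm_monoid_cancel.Zs_ND[OF cmc[OF l(1)] carrier_app[OF a l(1)] m(2) m(1)] l(2) by metis
    ultimately show ?thesis by (metis size_eq_0_iff_empty neq0_conv)
  qed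
  have uniq: "\<exists>i<n. W i \<noteq> W' i \<and> (\<forall>j<n. j \<noteq> i \<longrightarrow> W j = W' j)"
  proof (rule ccontr)
    assume nu: "\<not> (\<exists>i<n. W i \<noteq> W' i \<and> (\<forall>j<n. j \<noteq> i \<longrightarrow> W j = W' j))"
    have "is_chain (Zs G a) (d - 1) (Phi W) (Phi W')"
    proof (rule coord_chain[OF a W(1) W'(1)])
      fix k assume k: "k < n"
      show "is_chain (Zs (H k) (a k)) (d - 1) (W k) (W' k)"
      proof (cases "W k = W' k")
        case True then show ?thesis using chain_refl[OF P_mem[OF W(1) k]] by simp
      next
        case False
        then obtain l where l: "l < n" "l \<noteq> k" "W l \<noteq> W' l" using nu k by blast
        have "(\<Sum>j\<in>{k,l}. size (W j - W' j)) \<le> (\<Sum>j<n. size (W j - W' j))"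
          by (rule sum_mono2) (use k l in auto)
        then have s1: "size (W k - W' k) + size (W l - W' l) \<le> (\<Sum>j<n. size (W j - W' j))"
          using l(2) by simp
        have "(\<Sum>j\<in>{k,l}. size (W' j - W j)) \<le> (\<Sum>j<n. size (W' j - W j))"
          by (rule sum_mono2) (use k l in auto)
        then have s2: "size (W' k - W k) + size (W' l - W l) \<le> (\<Sum>j<n. size (W' j - W j))"
          using l(2) by simp
        have A: "(\<Sum>j<n. size (W j - W' j)) \<le> d" "(\<Sum>j<n. size (W' j - W j)) \<le> d"
          using dD unfolding Dist_def by auto
        have "size (W k - W' k) \<le> d - 1" "size (W' k - W k) \<le> d - 1"
          using s1 s2 A ND[OF l(1,3)] by linarith+
        then have "fdist (W k) (W' k) \<le> d - 1" unfolding fdist_def by simp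
        then show ?thesis by (rule chain_step[OF P_mem[OF W(1) k] P_mem[OF W'(1) k]])
      qed
    qed
    then show False using z(5) W(2) W'(2) by simp
  qed
  then obtain i where i: "i < n" "W i \<noteq> W' i" and oth: "\<And>j. j < n \<Longrightarrow> j \<noteq> i \<Longrightarrow> W j = W' j" by blast
  have "(\<Sum>j<n. size (W j - W' j)) = size (W i - W' i)"
    by (rule sum_single[OF i(1)]) (simp add: oth)
  moreover have "(\<Sum>j<n. size (W' j - W j)) = size (W' i - W i)"
    by (rule sum_single[OF i(1)]) (simp add: oth)
  ultimately have fd: "fdist (W i) (W' i) = d" using dD unfolding Dist_def fdist_def by simp
  have nch: "\<not> is_chain (Zs (H i) (a i)) (d - 1) (W i) (W' i)"
  proof
    assume ch: "is_chain (Zs (H i) (a i)) (d - 1) (W i) (W' i)"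
    have "is_chain (Zs G a) (d - 1) (Phi W) (Phi W')"
    proof (rule coord_chain[OF a W(1) W'(1)])
      fix k assume k: "k < n"
      show "is_chain (Zs (H k) (a k)) (d - 1) (W k) (W' k)"
      proof (cases "k = i")
        case True then show ?thesis using ch by simp
      next
        case False then show ?thesis using chain_refl[OF P_mem[OF W(1) k]] oth[OF k] by simp
      qed
    qed
    then show False using z(5) W(2) W'(2) by simp
  qed
  have "d \<in> Rset (H i)" unfolding Rset_def
    using d carrier_app[OF a i(1)] P_mem[OF W(1) i(1)] P_mem[OF W'(1) i(1)] i(2) fd nch by blast
  then show ?thesis using i(1) by blast
qed

lemma R_sup:
  assumes i: "i < n" and dR: "d \<in> Rset (H i)" shows "d \<in> Rset G"
proof -
  obtain x y y' where d: "2 \<le> d" and x: "x \<in> carrier (H i)" and y: "y \<in> Zs (H i) x" "y' \<in> Zs (H i) x" "y \<noteq> y'"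
    "fdist y y' = d" "\<not> is_chain (Zs (H i) x) (d - 1) y y'"
    using dR unfolding Rset_def by blast
  define w where "w = e i x"
  have wc: "w \<in> carrier G" unfolding w_def using e_carrier[OF i x] .
  have wi: "w i = x" unfolding w_def using i by simp
  have wu: "\<And>k. k < n \<Longrightarrow> k \<noteq> i \<Longrightarrow> w k \<in> Units (H k)" unfolding w_def using e_units[OF i] by blast
  have Sy: "S i y \<in> P w" "S i y' \<in> P w" using S_P[OF i wu] y(1,2) wi by auto
  have m: "Phi (S i y) \<in> Zs G w" "Phi (S i y') \<in> Zs G w" using Zs_sup[OF wc] Sy by auto
  have ne: "Phi (S i y) \<noteq> Phi (S i y')"
  proof
    assume "Phi (S i y) = Phi (S i y')"
    then have "S i y = S i y'" by (rule Phi_inj[OF Sy])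
    then have "S i y i = S i y' i" by simp
    then show False using y(3) S_at[OF i] by simp
  qed
  have "Dist n (S i y) (S i y') = fdist y y'"
    using Dist_upd[OF i, of "S i y" y y'] S_upd[OF i, of y y] S_upd[OF i, of y' y] by simp
  then have fd: "fdist (Phi (S i y)) (Phi (S i y')) = d" using fdist_PhiP[OF Sy] y(4) by simp
  have nch: "\<not> is_chain (Zs G w) (d - 1) (Phi (S i y)) (Phi (S i y'))"
  proof
    assume "is_chain (Zs G w) (d - 1) (Phi (S i y)) (Phi (S i y'))"
    then have "is_chain (Zs (H i) (w i)) (d - 1) (proj w i (Phi (S i y))) (proj w i (Phi (S i y')))"
      by (rule proj_chain[OF wc i])
    then show False using y(5) proj_Phi[OF Sy(1)] proj_Phi[OF Sy(2)] S_at[OF i] wi by simp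
  qed
  show ?thesis unfolding Rset_def using d wc m ne fd nch by blast
qed

lemma conn_G:
  assumes a: "a \<in> carrier G" and ne: "P a \<noteq> {}"
  shows "conn (Zs G a) N \<longleftrightarrow> (\<forall>k<n. conn (Zs (H k) (a k)) N)"
proof
  assume c: "conn (Zs G a) N"
  show "\<forall>k<n. conn (Zs (H k) (a k)) N"
  proof (intro allI impI)
    fix k assume k: "k < n"
    obtain W0 where W0: "W0 \<in> P a" using ne by blast
    show "conn (Zs (H k) (a k)) N" unfolding conn_def
    proof (intro ballI)
      fix y y' assume y: "y \<in> Zs (H k) (a k)" "y' \<in> Zs (H k) (a k)"
      have P: "W0(k := y) \<in> P a" "W0(k := y') \<in> P a" using P_upd[OF W0 k] y by auto
      have "is_chain (Zs G a) N (Phi (W0(k := y))) (Phi (W0(k := y')))"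
        using c Zs_sup[OF a P(1)] Zs_sup[OF a P(2)] unfolding conn_def by blast
      then have "is_chain (Zs (H k) (a k)) N (proj a k (Phi (W0(k := y)))) (proj a k (Phi (W0(k := y'))))"
        by (rule proj_chain[OF a k])
      then show "is_chain (Zs (H k) (a k)) N y y'" using proj_Phi[OF P(1)] proj_Phi[OF P(2)] by simp
    qed
  qed
next
  assume c: "\<forall>k<n. conn (Zs (H k) (a k)) N"
  show "conn (Zs G a) N" unfolding conn_def
  proof (intro ballI)
    fix z z' assume z: "z \<in> Zs G a" "z' \<in> Zs G a"
    obtain W where W: "W \<in> P a" "z = Phi W" using z(1) Zs_char[OF a] by blast
    obtain W' where W': "W' \<in> P a" "z' = Phi W'" using z(2) Zs_char[OF a] by blast
    have "is_chain (Zs G a) N (Phi W) (Phi W')"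
    proof (rule coord_chain[OF a W(1) W'(1)])
      fix k assume k: "k < n"
      then show "is_chain (Zs (H k) (a k)) N (W k) (W' k)"
        using c P_mem[OF W(1) k] P_mem[OF W'(1) k] unfolding conn_def by blast
    qed
    then show "is_chain (Zs G a) N z z'" using W W' by simp
  qed
qed

lemma Ca_sub:
  assumes BF: "\<And>i. i < n \<Longrightarrow> BF_monoid (H i)" and cC: "c \<in> Ca G"
  shows "\<exists>i<n. c \<in> Ca (H i)"
proof -
  obtain a z z' where a: "a \<in> carrier G" and z: "z \<in> Zs G a" "z' \<in> Zs G a" "z \<noteq> z'"
    and c: "c = catenary_degree G a"
    using cC unfolding Ca_def by blast
  obtain W where W: "W \<in> P a" "z = Phi W" using z(1) Zs_char[OF a] by blast
  obtain W' where W': "W' \<in> P a" "z' = Phi W'" using z(2) Zs_char[OF a] by blast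
  define K where "K = {k. k < n \<and> (\<exists>y\<in>Zs (H k) (a k). \<exists>y'\<in>Zs (H k) (a k). y \<noteq> y')}"
  have Kf: "finite K" unfolding K_def by simp
  have Kne: "K \<noteq> {}"
  proof -
    have "W \<noteq> W'" using z(3) W(2) W'(2) by blast
    then obtain k where k: "k < n" "W k \<noteq> W' k" using P_ext[OF W(1) W'(1)] by blast
    then have "k \<in> K" unfolding K_def using P_mem[OF W(1) k(1)] P_mem[OF W'(1) k(1)] by blast
    then show ?thesis by blast
  qed
  have pred: "conn (Zs G a) N \<longleftrightarrow> (\<forall>k\<in>K. conn (Zs (H k) (a k)) N)" for N
  proof -
    have "conn (Zs (H k) (a k)) N" if k: "k < n" "k \<notin> K" for k
      by (rule conn_single) (use k in \<open>auto simp: K_def\<close>)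
    then have "(\<forall>k<n. conn (Zs (H k) (a k)) N) \<longleftrightarrow> (\<forall>k\<in>K. conn (Zs (H k) (a k)) N)"
      unfolding K_def by blast
    then show ?thesis using conn_G[OF a] W(1) by blast
  qed
  have "(LEAST N. \<forall>k\<in>K. conn (Zs (H k) (a k)) N) \<in> (\<lambda>k. LEAST N. conn (Zs (H k) (a k)) N) ` K"
  proof (rule least_max[OF Kf Kne])
    fix k N M assume "k \<in> K" "N \<le> M" "conn (Zs (H k) (a k)) N"
    then show "conn (Zs (H k) (a k)) M" using conn_mono by blast
  next
    fix k assume "k \<in> K"
    then have k: "k < n" unfolding K_def by blast
    show "\<exists>N. conn (Zs (H k) (a k)) N" using conn_BF[OF BF[OF k] carrier_app[OF a k]] by blast
  qed
  moreover have "catenary_degree G a = (LEAST N. \<forall>k\<in>K. conn (Zs (H k) (a k)) N)"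
    unfolding cat_conn pred ..
  ultimately obtain k where k: "k \<in> K" "c = catenary_degree (H k) (a k)"
    using c unfolding cat_conn by auto
  have "c \<in> Ca (H k)" unfolding Ca_def using k carrier_app[OF a] unfolding K_def by blast
  then show ?thesis using k(1) unfolding K_def by blast
qed

lemma Ca_sup:
  assumes i: "i < n" and cC: "c \<in> Ca (H i)" shows "c \<in> Ca G"
proof -
  obtain x y y' where x: "x \<in> carrier (H i)" and y: "y \<in> Zs (H i) x" "y' \<in> Zs (H i) x" "y \<noteq> y'"
    and c: "c = catenary_degree (H i) x"
    using cC unfolding Ca_def by blast
  define w where "w = e i x"
  have wc: "w \<in> carrier G" unfolding w_def using e_carrier[OF i x] .
  have wi: "w i = x" unfolding w_def using i by simp
  have wu: "\<And>k. k < n \<Longrightarrow> k \<noteq> i \<Longrightarrow> w k \<in> Units (H k)" unfolding w_def using e_units[OF i] by blast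
  have Sy: "S i y \<in> P w" "S i y' \<in> P w" using S_P[OF i wu] y(1,2) wi by auto
  have m: "Phi (S i y) \<in> Zs G w" "Phi (S i y') \<in> Zs G w" using Zs_sup[OF wc] Sy by auto
  have ne: "Phi (S i y) \<noteq> Phi (S i y')"
  proof
    assume "Phi (S i y) = Phi (S i y')"
    then have "S i y = S i y'" by (rule Phi_inj[OF Sy])
    then have "S i y i = S i y' i" by simp
    then show False using y(3) S_at[OF i] by simp
  qed
  have pred: "conn (Zs G w) N \<longleftrightarrow> conn (Zs (H i) x) N" for N
  proof -
    have "conn (Zs (H k) (w k)) N" if k: "k < n" "k \<noteq> i" for k
      by (rule conn_single) (use Zs_unit_H[OF k(1) wu[OF k]] in simp)
    then have "(\<forall>k<n. conn (Zs (H k) (w k)) N) \<longleftrightarrow> conn (Zs (H i) x) N"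
      using i wi by metis
    then show ?thesis using conn_G[OF wc] Sy(1) by blast
  qed
  have cw: "catenary_degree G w = catenary_degree (H i) x"
    unfolding cat_conn pred ..
  have cc: "c = catenary_degree G w" using cw c by simp
  have "\<exists>z\<in>Zs G w. \<exists>z'\<in>Zs G w. z \<noteq> z'" using m ne by blast
  then show ?thesis unfolding Ca_def using cc wc by blast
qed

lemma atoms_iff: "u \<in> atoms K \<longleftrightarrow> u \<in> carrier K \<and> irreducible K u"
  by (simp add: atoms_def)

lemma Dl_sup:
  assumes i: "i < n" and dD: "d \<in> daleth_star (H i)" shows "d \<in> daleth_star G"
proof -
  obtain x y where xy: "x \<in> atoms (H i)" "y \<in> atoms (H i)"
    and card: "card (Ls (H i) (x \<otimes>\<^bsub>H i\<^esub> y)) > 1" and d: "d = Min (Ls (H i) (x \<otimes>\<^bsub>H i\<^esub> y) - {2})"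
    using dD unfolding daleth_star_def by blast
  have x: "x \<in> carrier (H i)" "irreducible (H i) x" and y: "y \<in> carrier (H i)" "irreducible (H i) y"
    using xy by (auto simp: atoms_iff)
  have u: "e i x \<in> atoms G" "e i y \<in> atoms G"
    using e_carrier[OF i x(1)] e_irr[OF i x] e_carrier[OF i y(1)] e_irr[OF i y] by (auto simp: atoms_iff)
  have xyc: "x \<otimes>\<^bsub>H i\<^esub> y \<in> carrier (H i)" using monoid.m_closed[OF mo[OF i] x(1) y(1)] .
  have eq: "e i x \<otimes>\<^bsub>G\<^esub> e i y = e i (x \<otimes>\<^bsub>H i\<^esub> y)" by (rule e_mult[OF i x(1) y(1)])
  have "Ls G (e i (x \<otimes>\<^bsub>H i\<^esub> y)) = Ls (H i) (e i (x \<otimes>\<^bsub>H i\<^esub> y) i)"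
    by (rule Ls_single[OF e_carrier[OF i xyc] i]) (rule e_units[OF i])
  then have L: "Ls G (e i x \<otimes>\<^bsub>G\<^esub> e i y) = Ls (H i) (x \<otimes>\<^bsub>H i\<^esub> y)" using eq i by simp
  show ?thesis unfolding daleth_star_def using u card d L by (intro CollectI exI[of _ "e i x"] exI[of _ "e i y"]) simp
qed

lemma Dl_sub:
  assumes dD: "d \<in> daleth_star G" shows "\<exists>i<n. d \<in> daleth_star (H i)"
proof -
  obtain u v where uv: "u \<in> atoms G" "v \<in> atoms G"
    and card: "card (Ls G (u \<otimes>\<^bsub>G\<^esub> v)) > 1" and d: "d = Min (Ls G (u \<otimes>\<^bsub>G\<^esub> v) - {2})"
    using dD unfolding daleth_star_def by blast
  have u: "u \<in> carrier G" "irreducible G u" and v: "v \<in> carrier G" "irreducible G v"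
    using uv by (auto simp: atoms_iff)
  obtain i where i: "i < n" "u i \<notin> Units (H i)" using irr_G_ex[OF u] by blast
  obtain j where j: "j < n" "v j \<notin> Units (H j)" using irr_G_ex[OF v] by blast
  note ui = irr_G_D[OF u i] and vj = irr_G_D[OF v j]
  define w where "w = u \<otimes>\<^bsub>G\<^esub> v"
  have wc: "w \<in> carrier G" unfolding w_def by (rule m_closedG[OF u(1) v(1)])
  have wk: "w k = u k \<otimes>\<^bsub>H k\<^esub> v k" if "k < n" for k unfolding w_def using mult_app[OF that] .
  show ?thesis
  proof (cases "i = j")
    case True
    have wu: "w k \<in> Units (H k)" if k: "k < n" "k \<noteq> i" for k
      using wk[OF k(1)] ui(2)[OF k] vj(2)[of k] k True monoid.Units_m_closed[OF mo[OF k(1)]] by simp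
    have L: "Ls G w = Ls (H i) (u i \<otimes>\<^bsub>H i\<^esub> v i)" using Ls_single[OF wc i(1) wu] wk[OF i(1)] by simp
    have "u i \<in> atoms (H i)" "v i \<in> atoms (H i)"
      using ui(1) vj(1) True carrier_app[OF u(1) i(1)] carrier_app[OF v(1) i(1)] by (auto simp: atoms_iff)
    then have "d \<in> daleth_star (H i)" unfolding daleth_star_def using card d L
      unfolding w_def by (intro CollectI exI[of _ "u i"] exI[of _ "v i"]) simp
    then show ?thesis using i by blast
  next
    case False
    have sum2: "(\<Sum>k<n. size (W k)) = 2" if W: "W \<in> P w" for W
    proof -
      have "size (W k) = (if k = i then 1 else 0) + (if k = j then 1 else 0)" if k: "k < n" for k
      proof (cases "k = i")
        case True
        have "v i \<in> Units (H i)" using vj(2)[OF i(1)] False by simp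
        then have "irreducible (H i) (w i)" using wk[OF i(1)]
          monoid.irreducible_prod_rI[OF mo[OF i(1)] ui(1) _ carrier_app[OF u(1) i(1)] carrier_app[OF v(1) i(1)]] by simp
        then have "size (W i) = 1"
          using comm_monoid_cancel.Zs_irr[OF cmc[OF i(1)] carrier_app[OF wc i(1)] _ P_mem[OF W i(1)]] by blast
        then show ?thesis using True False by simp
      next
        case ki: False
        show ?thesis
        proof (cases "k = j")
          case True
          have "u j \<in> Units (H j)" using ui(2)[OF j(1)] False by simp
          then have "irreducible (H j) (w j)" using wk[OF j(1)]
            comm_monoid.irreducible_prod_lI[OF cm[OF j(1)] vj(1) _ carrier_app[OF u(1) j(1)] carrier_app[OF v(1) j(1)]] by simp
          then have "size (W j) = 1"
            using comm_monoid_cancel.Zs_irr[OF cmc[OF j(1)] carrier_app[OF wc j(1)] _ P_mem[OF W j(1)]] by blast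
          then show ?thesis using True False by simp
        next
          case kj: False
          have "w k \<in> Units (H k)" using wk[OF k] ui(2)[OF k ki] vj(2)[OF k kj] monoid.Units_m_closed[OF mo[OF k]] by simp
          then have "W k = {#}" by (rule P_unit_coord[OF W k])
          then show ?thesis using ki kj by simp
        qed
      qed
      then have "(\<Sum>k<n. size (W k)) = (\<Sum>k<n. (if k = i then 1 else 0) + (if k = j then (1::nat) else 0))"
        by (intro sum.cong) auto
      also have "\<dots> = 2" using i(1) j(1) by (simp add: sum.distrib)
      finally show ?thesis .
    qed
    have "Ls G w \<subseteq> {2}" using Ls_G[OF wc] sum2 by auto
    then have "card (Ls G w) \<le> 1" using card_mono[of "{2::nat}"] by fastforce
    then show ?thesis using card unfolding w_def by simp
  qed
qed

end

theorem lemma3p1: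
  fixes n :: nat and H :: "nat \<Rightarrow> ('a, 'b) monoid_scheme"
  assumes "\<And>i. i < n \<Longrightarrow> BF_monoid (H i)"
  shows "Rset (prodM n H) = (\<Union>i<n. Rset (H i)) \<and>
         Ca (prodM n H) = (\<Union>i<n. Ca (H i)) \<and>
         daleth_star (prodM n H) = (\<Union>i<n. daleth_star (H i))"
proof -
  have cm: "\<And>i. i < n \<Longrightarrow> comm_monoid_cancel (H i)" using assms unfolding BF_monoid_def by blast
  interpret prodfam n H by (rule prodfam.intro[OF cm])
  have 1: "Rset (prodM n H) = (\<Union>i<n. Rset (H i))"
  proof (rule equalityI)
    show "Rset (prodM n H) \<subseteq> (\<Union>i<n. Rset (H i))" using R_sub by blast
    show "(\<Union>i<n. Rset (H i)) \<subseteq> Rset (prodM n H)" using R_sup by blast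
  qed
  have 2: "Ca (prodM n H) = (\<Union>i<n. Ca (H i))"
  proof (rule equalityI)
    show "Ca (prodM n H) \<subseteq> (\<Union>i<n. Ca (H i))" using Ca_sub[OF assms] by blast
    show "(\<Union>i<n. Ca (H i)) \<subseteq> Ca (prodM n H)" using Ca_sup by blast
  qed
  have 3: "daleth_star (prodM n H) = (\<Union>i<n. daleth_star (H i))"
  proof (rule equalityI)
    show "daleth_star (prodM n H) \<subseteq> (\<Union>i<n. daleth_star (H i))" using Dl_sub by blast
    show "(\<Union>i<n. daleth_star (H i)) \<subseteq> daleth_star (prodM n H)" using Dl_sup by blast
  qed
  show ?thesis using 1 2 3 by blast
qed

end
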